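(* Let $E\subset\mathbb R^{n+1}$ be a bounded set satisfying the uniform ball condition (with some radius). Then $$2\|S_E\|_{L^\infty}=\frac1{r_E}\quad\text{and}\quad\frac{|\nu_E(x)-\nu_E(y)|}{|x-y|}\le2\|S_E\|_{L^\infty}\ \text{ for all }x,y\in\partial E,\ x\ne y.$$ If $E$ is moreover $C^2$-regular, then $|H_E|,|B_E|\le2n\|S_E\|_{L^\infty}$ on $\partial E$.
   Context: $E$ satisfies the uniform ball condition with radius $r$ if for every $x\in\partial E$ there are balls $B_r(x_+)\subset\mathbb R^{n+1}\setminus E$, $B_r(x_-)\subset E$ with $x\in\partial B_r(x_+)\cap\partial B_r(x_-)$; $\nu_E$ is the outer unit normal. For $x\ne y$ in $\partial E$, $S_E(x,y)=\frac{(x-y)\cdot\nu_E(x)}{|x-y|^2}$, and $\|S_E\|_{L^\infty}=\sup\{|S_E(x,y)|:x,y\in\partial E,x\ne y\}$. $r_E=\sup\{r>0: d_E\text{ is differentiable in }\mathcal N_r(\partial E)\}$, where $d_E$ is the signed distance to $E$ and $\mathcal N_r(\partial E)=\{x:\mathrm{dist}(x,\partial E)<r\}$. $H_E$ is the mean curvature and $B_E$ the second fundamental form (Frobenius norm). *)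

theory Defs
  imports "HOL-Analysis.Analysis"
begin

text \<open>Ambient space R^(n+1) is an arbitrary euclidean_space 'a, with n = DIM('a) - 1.\<close>

definition uniform_ball :: "'a::euclidean_space set \<Rightarrow> real \<Rightarrow> bool" where
  "uniform_ball E r \<longleftrightarrow>
     (\<forall>x\<in>frontier E. \<exists>xp xm. ball xp r \<subseteq> - E \<and> ball xm r \<subseteq> E
                          \<and> dist x xp = r \<and> dist x xm = r)"

text \<open>nu is an outer unit normal of E at x: E is approximated near x by the half-space
  {y. (y - x) . nu <= 0} (points strictly on the outer side of any cone around nu are
  outside E, points strictly on the inner side are inside E).\<close>
definition is_outer_normal :: "'a::euclidean_space set \<Rightarrow> 'a \<Rightarrow> 'a \<Rightarrow> bool" where
  "is_outer_normal E x \<nu> \<longleftrightarrow> norm \<nu> = 1 \<and>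
     (\<forall>\<epsilon>>0. \<exists>\<delta>>0. \<forall>y\<in>ball x \<delta>.
        ((y - x) \<bullet> \<nu> > \<epsilon> * norm (y - x) \<longrightarrow> y \<notin> E) \<and>
        ((y - x) \<bullet> \<nu> < - \<epsilon> * norm (y - x) \<longrightarrow> y \<in> E))"

definition outer_normal :: "'a::euclidean_space set \<Rightarrow> 'a \<Rightarrow> 'a" where
  "outer_normal E x = (THE \<nu>. is_outer_normal E x \<nu>)"

definition S_kernel :: "'a::euclidean_space set \<Rightarrow> 'a \<Rightarrow> 'a \<Rightarrow> real" where
  "S_kernel E x y = ((x - y) \<bullet> outer_normal E x) / (norm (x - y))\<^sup>2"

definition S_Linf :: "'a::euclidean_space set \<Rightarrow> real" where
  "S_Linf E = Sup {\<bar>S_kernel E x y\<bar> | x y. x \<in> frontier E \<and> y \<in> frontier E \<and> x \<noteq> y}"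

definition signed_dist :: "'a::euclidean_space set \<Rightarrow> 'a \<Rightarrow> real" where
  "signed_dist E x = infdist x E - infdist x (- E)"

definition reach_rE :: "'a::euclidean_space set \<Rightarrow> real" where
  "reach_rE E = Sup {r. r > 0 \<and>
     (\<forall>x. infdist x (frontier E) < r \<longrightarrow> signed_dist E differentiable (at x))}"

definition C2_regular :: "'a::euclidean_space set \<Rightarrow> bool" where
  "C2_regular E \<longleftrightarrow> (\<forall>x\<in>frontier E. \<exists>r>0. \<exists>\<phi> g g'.
      (\<forall>y\<in>ball x r. (\<phi> has_derivative (\<lambda>h. g y \<bullet> h)) (at y)
                   \<and> (g has_derivative g' y) (at y) \<and> g y \<noteq> 0) \<and>
      (\<forall>h. continuous_on (ball x r) (\<lambda>y. g' y h)) \<and>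
      interior E \<inter> ball x r = {y \<in> ball x r. \<phi> y < 0} \<and>
      frontier E \<inter> ball x r = {y \<in> ball x r. \<phi> y = 0})"

text \<open>Differential of the Gauss map along the boundary (Weingarten map); its restriction
  to the tangent space is the second fundamental form.\<close>
definition gauss_diff :: "'a::euclidean_space set \<Rightarrow> 'a \<Rightarrow> 'a \<Rightarrow> 'a" where
  "gauss_diff E x = (SOME L. (outer_normal E has_derivative L) (at x within frontier E))"

definition tang_proj :: "'a::euclidean_space set \<Rightarrow> 'a \<Rightarrow> 'a \<Rightarrow> 'a" where
  "tang_proj E x v = v - (v \<bullet> outer_normal E x) *\<^sub>R outer_normal E x"

text \<open>Mean curvature = trace of the second fundamental form (sum of principal curvatures).\<close>
definition mean_curv :: "'a::euclidean_space set \<Rightarrow> 'a \<Rightarrow> real" where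
  "mean_curv E x = (\<Sum>b\<in>Basis. b \<bullet> gauss_diff E x (tang_proj E x b))"

definition sff_norm :: "'a::euclidean_space set \<Rightarrow> 'a \<Rightarrow> real" where
  "sff_norm E x = sqrt (\<Sum>b\<in>Basis. (norm (gauss_diff E x (tang_proj E x b)))\<^sup>2)"

end

theory Submission
  imports Defs "HOL-Analysis.Analysis"
begin


lemma disjoint_balls_dist:
  fixes a b :: "'a::euclidean_space"
  assumes "ball a R \<inter> ball b R' = {}" "0 < R" "0 < R'"
  shows "R + R' \<le> dist a b"
proof (rule ccontr)
  assume H: "\<not> R + R' \<le> dist a b"
  define z where "z = a + (R/(R+R')) *\<^sub>R (b - a)"
  have "dist a z = R/(R+R') * dist a b"
    using assms by (simp add: z_def dist_norm norm_minus_commute)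
  also have "\<dots> < R"
  proof -
    have "R * dist a b < R * (R+R')" using H assms by (intro mult_strict_left_mono) auto
    thus ?thesis using assms by (simp add: field_simps)
  qed
  finally have 1: "z \<in> ball a R" by simp
  have "b - z = (1 - R/(R+R')) *\<^sub>R (b - a)"
    by (simp add: z_def algebra_simps)
  also have "1 - R/(R+R') = R'/(R+R')" using assms by (simp add: field_simps)
  finally have "b - z = (R'/(R+R')) *\<^sub>R (b - a)" .
  hence "dist b z = R'/(R+R') * dist a b"
    using assms by (simp add: dist_norm norm_minus_commute)
  also have "\<dots> < R'"
  proof -
    have "R' * dist a b < R' * (R+R')" using H assms by (intro mult_strict_left_mono) auto
    thus ?thesis using assms by (simp add: field_simps)
  qed
  finally have 2: "z \<in> ball b R'" by simp
  show False using 1 2 assms(1) by blast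
qed

lemma collinear_extreme:
  fixes a b :: "'a::euclidean_space"
  assumes "norm a = d" "norm b = R" "d + R \<le> norm (a - b)" "0 < R"
  shows "a = - (d/R) *\<^sub>R b"
proof -
  have "(d+R)^2 \<le> (norm (a - b))^2" using assms
    by (metis add_nonneg_nonneg norm_ge_zero power_mono)
  also have "(norm (a - b))^2 = d^2 + R^2 - 2 * (a \<bullet> b)"
  proof -
    have "(norm (a - b))^2 = a \<bullet> a + b \<bullet> b - 2 * (a \<bullet> b)"
      by (simp add: power2_norm_eq_inner inner_diff algebra_simps inner_commute)
    thus ?thesis using assms by (simp add: power2_norm_eq_inner[symmetric])
  qed
  finally have ab: "a \<bullet> b \<le> - d * R" by (simp add: power2_eq_square algebra_simps)
  have "(norm (a + (d/R) *\<^sub>R b))^2 = a \<bullet> a + 2*(d/R)*(a \<bullet> b) + (d/R)^2 * (b \<bullet> b)"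
    unfolding power2_norm_eq_inner by (simp add: inner_add_left inner_add_right inner_commute algebra_simps power2_eq_square)
  also have "\<dots> = d^2 + 2*(d/R)*(a \<bullet> b) + (d/R)^2 * R^2"
    using assms by (simp add: power2_norm_eq_inner[symmetric])
  also have "\<dots> = 2 * d^2 + 2*(d/R)*(a \<bullet> b)" using assms by (simp add: power2_eq_square)
  also have "\<dots> \<le> 0"
  proof -
    have "d \<ge> 0" using assms(1) by auto
    hence "(d/R)*(a \<bullet> b) \<le> (d/R) * (-d*R)" using ab assms by (intro mult_left_mono) auto
    thus ?thesis using assms by (simp add: power2_eq_square)
  qed
  finally have "norm (a + (d/R) *\<^sub>R b) = 0"
    by (metis norm_ge_zero order_antisym_conv zero_le_power2 power_zero_numeral zero_eq_power2)
  thus ?thesis by (simp add: eq_neg_iff_add_eq_0)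
qed

lemma normal_unique:
  fixes E :: "'a::euclidean_space set"
  assumes "is_outer_normal E x n1" "is_outer_normal E x n2"
  shows "n1 = n2"
proof (rule ccontr)
  assume ne: "n1 \<noteq> n2"
  define w where "w = n1 - n2"
  have wpos: "norm w > 0" using ne by (simp add: w_def)
  have n1: "norm n1 = 1" and n2: "norm n2 = 1" using assms by (auto simp: is_outer_normal_def)
  have ww: "w \<bullet> w = 2 - 2 * (n1 \<bullet> n2)"
    using n1 n2 by (simp add: w_def inner_diff_left inner_diff_right inner_commute norm_eq_1)
  have nw: "(norm w)^2 = 2 - 2 * (n1 \<bullet> n2)" using ww by (simp add: power2_norm_eq_inner)
  have "w \<bullet> n1 = 1 - n1 \<bullet> n2"
    using n1 by (simp add: w_def inner_diff_left inner_diff_right inner_commute norm_eq_1)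
  hence w1: "w \<bullet> n1 = (norm w)^2 / 2" using nw by simp
  have "w \<bullet> n2 = n1 \<bullet> n2 - 1"
    using n2 by (simp add: w_def inner_diff_left inner_diff_right inner_commute norm_eq_1)
  hence w2: "w \<bullet> n2 = - ((norm w)^2 / 2)" using nw by (simp add: field_simps)
  define e where "e = norm w / 4"
  have e: "e > 0" using wpos by (simp add: e_def)
  obtain d1 where d1: "d1 > 0" "\<forall>y\<in>ball x d1. ((y - x) \<bullet> n1 > e * norm (y - x) \<longrightarrow> y \<notin> E)"
    using assms(1) e unfolding is_outer_normal_def by meson
  obtain d2 where d2: "d2 > 0" "\<forall>y\<in>ball x d2. ((y - x) \<bullet> n2 < - e * norm (y - x) \<longrightarrow> y \<in> E)"
    using assms(2) e unfolding is_outer_normal_def by meson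
  define t where "t = min d1 d2 / (2 * norm w)"
  have t: "t > 0" using d1 d2 wpos by (simp add: t_def)
  define y where "y = x + t *\<^sub>R w"
  have ny: "norm (y - x) = t * norm w" using t by (simp add: y_def)
  have "norm (y - x) < d1" "norm (y - x) < d2" using ny wpos d1 d2 by (auto simp: t_def)
  hence yb: "y \<in> ball x d1" "y \<in> ball x d2" by (auto simp: dist_norm norm_minus_commute)
  have "(y - x) \<bullet> n1 = t * (norm w)^2 / 2" using w1 by (simp add: y_def)
  moreover have "e * norm (y - x) = t * (norm w)^2 / 4" using ny by (simp add: e_def power2_eq_square)
  moreover have "t * (norm w)^2 > 0" using t wpos by simp
  ultimately have "(y - x) \<bullet> n1 > e * norm (y - x)" by linarith
  hence "y \<notin> E" using d1 yb by blast
  have "(y - x) \<bullet> n2 = - t * (norm w)^2 / 2" using w2 by (simp add: y_def)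
  moreover have "e * norm (y - x) = t * (norm w)^2 / 4" using ny by (simp add: e_def power2_eq_square)
  moreover have "t * (norm w)^2 > 0" using t wpos by simp
  ultimately have "(y - x) \<bullet> n2 < - e * norm (y - x)" by linarith
  hence "y \<in> E" using d2 yb by blast
  thus False using \<open>y \<notin> E\<close> by blast
qed

lemma normal_from_balls:
  fixes E :: "'a::euclidean_space set"
  assumes "norm n = 1" "0 < R" "ball (x + R *\<^sub>R n) R \<subseteq> - E" "ball (x - R *\<^sub>R n) R \<subseteq> E"
  shows "is_outer_normal E x n"
  unfolding is_outer_normal_def
proof (intro conjI allI impI)
  show "norm n = 1" by fact
  fix e :: real assume e: "e > 0"
  show "\<exists>d>0. \<forall>y\<in>ball x d. (e * norm (y - x) < (y - x) \<bullet> n \<longrightarrow> y \<notin> E) \<and>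
           ((y - x) \<bullet> n < - e * norm (y - x) \<longrightarrow> y \<in> E)"
  proof (intro exI[of _ "2*R*e"] conjI ballI impI)
    show "2*R*e > 0" using e assms by simp
    fix y assume y: "y \<in> ball x (2*R*e)"
    hence ny: "norm (y - x) < 2*R*e" by (simp add: dist_norm norm_minus_commute)
    have nn: "n \<bullet> n = 1" using assms(1) by (simp add: norm_eq_1)
    have "norm (y - x) * norm (y - x) \<le> 2*R*e * norm (y - x)"
      using ny by (intro mult_right_mono) auto
    note nyy = this
    {
      assume h: "e * norm (y - x) < (y - x) \<bullet> n"
      have "(norm (y - (x + R *\<^sub>R n)))^2 = (norm (y - x))^2 - 2*R*((y - x) \<bullet> n) + R^2"
        using nn unfolding power2_norm_eq_inner
        by (simp add: inner_diff_left inner_diff_right inner_add_left inner_add_right inner_commute algebra_simps power2_eq_square)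
      also have "\<dots> < R^2"
      proof -
        have "2*R*(e * norm (y - x)) < 2*R*((y - x) \<bullet> n)" using h assms(2)
          by (intro mult_strict_left_mono) auto
        thus ?thesis using nyy by (simp add: power2_eq_square algebra_simps)
      qed
      finally have "norm (y - (x + R *\<^sub>R n)) < R"
        using assms(2) using power2_less_imp_less by fastforce
      hence "y \<in> ball (x + R *\<^sub>R n) R" by (simp add: dist_norm norm_minus_commute)
      thus "y \<notin> E" using assms(3) by blast
    }
    {
      assume h: "(y - x) \<bullet> n < - e * norm (y - x)"
      have "(norm (y - (x - R *\<^sub>R n)))^2 = (norm (y - x))^2 + 2*R*((y - x) \<bullet> n) + R^2"
        using nn unfolding power2_norm_eq_inner
        by (simp add: inner_diff_left inner_diff_right inner_add_left inner_add_right inner_commute algebra_simps power2_eq_square)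
      also have "\<dots> < R^2"
      proof -
        have "2*R*((y - x) \<bullet> n) < 2*R*(- e * norm (y - x))" using h assms(2)
          by (intro mult_strict_left_mono) auto
        thus ?thesis using nyy by (simp add: power2_eq_square algebra_simps)
      qed
      finally have "norm (y - (x - R *\<^sub>R n)) < R"
        using assms(2) using power2_less_imp_less by fastforce
      hence "y \<in> ball (x - R *\<^sub>R n) R" by (simp add: dist_norm norm_minus_commute)
      thus "y \<in> E" using assms(4) by blast
    }
  qed
qed

lemma outer_normal_eq:
  fixes E :: "'a::euclidean_space set"
  assumes "is_outer_normal E x n"
  shows "outer_normal E x = n"
  unfolding outer_normal_def using assms normal_unique by blast

definition ubn :: "'a::euclidean_space set \<Rightarrow> real \<Rightarrow> bool" where
  "ubn E R \<longleftrightarrow> (\<forall>x\<in>frontier E. norm (outer_normal E x) = 1 \<and>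
      ball (x + R *\<^sub>R outer_normal E x) R \<subseteq> - E \<and> ball (x - R *\<^sub>R outer_normal E x) R \<subseteq> E)"

lemma uniform_ball_ubn:
  fixes E :: "'a::euclidean_space set"
  assumes "uniform_ball E R" "R > 0"
  shows "ubn E R"
  unfolding ubn_def
proof
  fix x assume x: "x \<in> frontier E"
  then obtain xp xm where b: "ball xp R \<subseteq> - E" "ball xm R \<subseteq> E" "dist x xp = R" "dist x xm = R"
    using assms(1) unfolding uniform_ball_def by blast
  have "ball xp R \<inter> ball xm R = {}" using b by blast
  hence d: "R + R \<le> dist xp xm" using disjoint_balls_dist assms(2) by blast
  have "xp - x = - (R/R) *\<^sub>R (xm - x)"
    using collinear_extreme[of "xp - x" R "xm - x" R] b d assms(2)
    by (simp add: dist_norm norm_minus_commute)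
  hence xm: "xm = x - (xp - x)" using assms(2) by (simp add: algebra_simps)
  define n where "n = (1/R) *\<^sub>R (xp - x)"
  have nn: "norm n = 1" using b(3) assms(2) by (simp add: n_def dist_norm norm_minus_commute)
  have p: "x + R *\<^sub>R n = xp" using assms(2) by (simp add: n_def)
  have m: "x - R *\<^sub>R n = xm" using assms(2) xm by (simp add: n_def algebra_simps)
  have "is_outer_normal E x n" using normal_from_balls[OF nn assms(2)] p m b by simp
  hence "outer_normal E x = n" by (rule outer_normal_eq)
  thus "norm (outer_normal E x) = 1 \<and> ball (x + R *\<^sub>R outer_normal E x) R \<subseteq> - E \<and>
      ball (x - R *\<^sub>R outer_normal E x) R \<subseteq> E" using nn p m b by simp
qed



lemma infdist_closure_eq: "infdist x (closure A) = infdist x A"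
  by (simp add: infdist_eq_setdist)

lemma infdist_geI:
  assumes "A \<noteq> {}" "\<And>a. a \<in> A \<Longrightarrow> b \<le> dist x a"
  shows "b \<le> infdist x A"
  using assms by (simp add: infdist_notempty cINF_greatest)

lemma signed_dist_compl: "signed_dist (- F) y = - signed_dist F y"
  by (simp add: signed_dist_def)

lemma sd_lower:
  fixes F :: "'a::euclidean_space set"
  assumes "ball c R \<subseteq> - F" "F \<noteq> {}" "R > 0"
  shows "R - dist y c \<le> signed_dist F y"
proof (cases "dist y c < R")
  case True
  hence "y \<in> - F" using assms(1) by (auto simp: dist_commute)
  hence "infdist y (- F) = 0" by simp
  moreover have "R - dist y c \<le> infdist y F"
  proof (rule infdist_geI[OF assms(2)])
    fix a assume "a \<in> F"
    hence "a \<notin> ball c R" using assms(1) by blast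
    hence "R \<le> dist c a" by simp
    thus "R - dist y c \<le> dist y a" using dist_triangle[of c a y] by (simp add: dist_commute)
  qed
  ultimately show ?thesis by (simp add: signed_dist_def)
next
  case False
  hence yc: "y \<noteq> c" "dist y c \<ge> R" using assms(3) by auto
  define q where "q = c + (R / dist y c) *\<^sub>R (y - c)"
  have "dist c q = R" using yc assms(3) by (simp add: q_def dist_norm dist_commute)
  hence "q \<in> cball c R" by simp
  also have "cball c R = closure (ball c R)" using assms(3) by simp
  also have "\<dots> \<subseteq> closure (- F)" using assms(1) by (rule closure_mono)
  finally have qF: "q \<in> closure (- F)" .
  have "y - q = (1 - R / dist y c) *\<^sub>R (y - c)" by (simp add: q_def algebra_simps)
  hence "dist y q = \<bar>1 - R / dist y c\<bar> * dist y c" by (simp add: dist_norm)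
  also have "\<bar>1 - R / dist y c\<bar> = 1 - R / dist y c" using yc assms(3) by simp
  also have "(1 - R / dist y c) * dist y c = dist y c - R" using yc by (simp add: field_simps)
  finally have "infdist y (closure (- F)) \<le> dist y c - R" using infdist_le[OF qF, of y] by simp
  hence "infdist y (- F) \<le> dist y c - R" by (simp add: infdist_closure_eq)
  thus ?thesis using infdist_nonneg[of y F] by (simp add: signed_dist_def)
qed

lemma squeeze_deriv:
  fixes f g h :: "'a::real_normed_vector \<Rightarrow> real"
  assumes "\<And>y. f y \<le> g y" "\<And>y. g y \<le> h y" "f x = g x" "h x = g x"
    "(f has_derivative D) (at x)" "(h has_derivative D) (at x)"
  shows "(g has_derivative D) (at x)"
  unfolding has_derivative_at_alt
proof (intro conjI allI impI)
  show "bounded_linear D" using assms(5) by (simp add: has_derivative_at_alt)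
  fix e :: real assume e: "e > 0"
  obtain d1 where d1: "d1 > 0" "\<forall>y. norm (y - x) < d1 \<longrightarrow> norm (f y - f x - D (y - x)) \<le> e * norm (y - x)"
    using assms(5) e unfolding has_derivative_at_alt by blast
  obtain d2 where d2: "d2 > 0" "\<forall>y. norm (y - x) < d2 \<longrightarrow> norm (h y - h x - D (y - x)) \<le> e * norm (y - x)"
    using assms(6) e unfolding has_derivative_at_alt by blast
  show "\<exists>d>0. \<forall>y. norm (y - x) < d \<longrightarrow> norm (g y - g x - D (y - x)) \<le> e * norm (y - x)"
  proof (intro exI[of _ "min d1 d2"] conjI allI impI)
    show "min d1 d2 > 0" using d1 d2 by simp
    fix y assume "norm (y - x) < min d1 d2"
    hence a: "\<bar>f y - f x - D (y - x)\<bar> \<le> e * norm (y - x)"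
      and b: "\<bar>h y - h x - D (y - x)\<bar> \<le> e * norm (y - x)" using d1 d2 by auto
    have "f y \<le> g y" "g y \<le> h y" using assms(1,2) by auto
    thus "norm (g y - g x - D (y - x)) \<le> e * norm (y - x)"
      using a b assms(3,4) by (simp add: abs_le_iff)
  qed
qed

lemma dist_has_derivative:
  fixes c x :: "'a::euclidean_space"
  assumes "x \<noteq> c"
  shows "((\<lambda>y. dist y c) has_derivative (\<lambda>h. h \<bullet> sgn (x - c))) (at x)"
proof -
  have 1: "((\<lambda>y. y - c) has_derivative (\<lambda>h. h)) (at x)" by (auto intro!: derivative_eq_intros)
  have 2: "(norm has_derivative (\<lambda>h. h \<bullet> sgn (x - c))) (at (x - c))"
    using has_derivative_norm[of "x - c"] assms by simp
  show ?thesis using has_derivative_compose[OF 1 2] by (simp add: dist_norm)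
qed

lemma sd_deriv_normal:
  fixes E :: "'a::euclidean_space set"
  assumes ub: "ubn E R" and R: "R > 0" and p: "p \<in> frontier E" and t: "\<bar>t\<bar> < R"
    and ne: "E \<noteq> {}" "- E \<noteq> {}"
  shows "(signed_dist E has_derivative (\<lambda>h. h \<bullet> outer_normal E p)) (at (p + t *\<^sub>R outer_normal E p))"
proof -
  define n where "n = outer_normal E p"
  have n: "norm n = 1" and b1: "ball (p + R *\<^sub>R n) R \<subseteq> - E" and b2: "ball (p - R *\<^sub>R n) R \<subseteq> E"
    using ub p unfolding ubn_def n_def by auto
  define x where "x = p + t *\<^sub>R n"
  define c where "c = p + R *\<^sub>R n"
  define c' where "c' = p - R *\<^sub>R n"
  have xc: "x - c = (t - R) *\<^sub>R n" by (simp add: x_def c_def algebra_simps)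
  have xc': "x - c' = (t + R) *\<^sub>R n" by (simp add: x_def c'_def algebra_simps)
  have tR1: "t - R < 0" and tR2: "t + R > 0" using t by auto
  have dc: "dist x c = R - t" using xc tR1 n by (simp add: dist_norm)
  have dc': "dist x c' = R + t" using xc' tR2 n by (simp add: dist_norm)
  have "inverse (R - t) * (t - R) = -1" using tR1 by (simp add: field_simps)
  hence sg1: "sgn (x - c) = - n" using xc tR1 n by (simp add: sgn_scaleR sgn_div_norm)
  have sg2: "sgn (x - c') = n" using xc' tR2 n by (simp add: sgn_scaleR sgn_div_norm)
  have "x \<noteq> c" using dc t by auto
  have "x \<noteq> c'" using dc' t by auto
  have Df: "((\<lambda>y. R - dist y c) has_derivative (\<lambda>h. h \<bullet> n)) (at x)"
    using dist_has_derivative[OF \<open>x \<noteq> c\<close>] sg1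
    by (auto intro!: derivative_eq_intros)
  have Dh: "((\<lambda>y. dist y c' - R) has_derivative (\<lambda>h. h \<bullet> n)) (at x)"
    using dist_has_derivative[OF \<open>x \<noteq> c'\<close>] sg2
    by (auto intro!: derivative_eq_intros)
  have lo: "\<And>y. R - dist y c \<le> signed_dist E y"
    using sd_lower[OF b1[folded c_def] ne(1) R] by blast
  have hi: "\<And>y. signed_dist E y \<le> dist y c' - R"
  proof -
    fix y
    have "ball c' R \<subseteq> - (- E)" using b2 by (simp add: c'_def)
    from sd_lower[OF this ne(2) R, of y] show "signed_dist E y \<le> dist y c' - R"
      by (simp add: signed_dist_compl)
  qed
  have "signed_dist E x \<le> t" using hi[of x] dc' by simp
  moreover have "signed_dist E x \<ge> t" using lo[of x] dc by simp
  ultimately have sx: "signed_dist E x = t" by simp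
  show ?thesis
    unfolding n_def[symmetric] x_def[symmetric]
    by (rule squeeze_deriv[OF lo hi _ _ Df Dh]) (use sx dc dc' in auto)
qed

lemma nearest_in_frontier:
  fixes F :: "'a::euclidean_space set"
  assumes "x \<notin> closure F" "p \<in> closure F" "\<And>y. y \<in> closure F \<Longrightarrow> dist x p \<le> dist x y"
  shows "p \<in> frontier F"
proof -
  define d where "d = dist x p"
  have d: "d > 0" using assms(1,2) by (auto simp: d_def)
  have "p \<in> closure (- F)"
    unfolding closure_approachable
  proof (intro allI impI)
    fix e :: real assume e: "e > 0"
    define l where "l = min 1 (e / (2*d))"
    have l: "0 < l" "l \<le> 1" "l * d \<le> e/2" using e d by (auto simp: l_def min_def field_simps)
    define y where "y = p + l *\<^sub>R (x - p)"
    have "dist y p = l * d" using l by (simp add: y_def d_def dist_norm norm_minus_commute)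
    hence yp: "dist y p < e" using l e by simp
    have "x - y = (1 - l) *\<^sub>R (x - p)" by (simp add: y_def algebra_simps)
    hence "dist x y = (1 - l) * d" using l by (simp add: d_def dist_norm)
    hence "dist x y < d" using l d by (simp add: algebra_simps) (smt (verit) mult_pos_pos)
    hence "y \<notin> closure F" using assms(3)[of y] by (auto simp: d_def)
    hence "y \<in> - F" using closure_subset by blast
    thus "\<exists>y\<in>- F. dist y p < e" using yp by blast
  qed
  thus ?thesis using assms(2) by (simp add: frontier_closures)
qed

lemma nearest_point_normal:
  fixes F :: "'a::euclidean_space set"
  assumes nf: "\<forall>p\<in>frontier F. norm (u p) = 1 \<and> ball (p + R *\<^sub>R u p) R \<subseteq> - F \<and> ball (p - R *\<^sub>R u p) R \<subseteq> F"
    and R: "R > 0" and x: "x \<notin> closure F" and xd: "infdist x (frontier F) < R" and ne: "F \<noteq> {}"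
  shows "\<exists>p\<in>frontier F. \<exists>d. 0 < d \<and> d < R \<and> x = p + d *\<^sub>R u p"
proof -
  obtain p where p: "p \<in> closure F" "\<And>y. y \<in> closure F \<Longrightarrow> dist x p \<le> dist x y"
    using distance_attains_inf[of "closure F" x] ne by auto
  define d where "d = dist x p"
  have d: "d > 0" using x p by (auto simp: d_def)
  have pf: "p \<in> frontier F" using nearest_in_frontier[OF x p] .
  have "infdist x (closure F) = d"
  proof (rule antisym)
    show "infdist x (closure F) \<le> d" using infdist_le[OF p(1)] by (simp add: d_def)
    show "d \<le> infdist x (closure F)" using p ne by (intro infdist_geI) (auto simp: d_def)
  qed
  moreover have "infdist x (closure F) \<le> infdist x (frontier F)"
    using pf by (intro infdist_mono) (auto simp: frontier_def)
  ultimately have dR: "d < R" using xd by simp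
  have nu: "norm (u p) = 1" and bF: "ball (p - R *\<^sub>R u p) R \<subseteq> F" using nf pf by auto
  have "ball x d \<inter> F = {}"
  proof (rule ccontr)
    assume "ball x d \<inter> F \<noteq> {}"
    then obtain y where "y \<in> F" "dist x y < d" by auto
    thus False using p(2)[of y] closure_subset by (force simp: d_def)
  qed
  hence "ball x d \<inter> ball (p - R *\<^sub>R u p) R = {}" using bF by blast
  hence dd: "d + R \<le> dist x (p - R *\<^sub>R u p)" using disjoint_balls_dist d R by blast
  have "x - p = - (d/R) *\<^sub>R ((p - R *\<^sub>R u p) - p)"
    by (rule collinear_extreme) (use dd nu R in \<open>auto simp: d_def dist_norm algebra_simps\<close>)
  hence "x = p + d *\<^sub>R u p" using R by (simp add: algebra_simps)
  thus ?thesis using pf d dR by blast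
qed

lemma ubn_reach:
  fixes E :: "'a::euclidean_space set"
  assumes ub: "ubn E R" and R: "R > 0" and ne: "E \<noteq> {}" "- E \<noteq> {}"
  shows "\<forall>x. infdist x (frontier E) < R \<longrightarrow> signed_dist E differentiable (at x)"
proof (intro allI impI)
  fix x assume xd: "infdist x (frontier E) < R"
  have nf1: "\<forall>p\<in>frontier E. norm (outer_normal E p) = 1 \<and> ball (p + R *\<^sub>R outer_normal E p) R \<subseteq> - E
     \<and> ball (p - R *\<^sub>R outer_normal E p) R \<subseteq> E"
    using ub unfolding ubn_def by blast
  show "signed_dist E differentiable (at x)"
  proof (cases "x \<in> frontier E")
    case True
    from sd_deriv_normal[OF ub R True _ ne, of 0] R show ?thesis
      unfolding differentiable_def by auto
  next
    case xnf: False
    show ?thesis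
    proof (cases "x \<in> closure E")
      case False
      then obtain p d where pd: "p \<in> frontier E" "0 < d" "d < R" "x = p + d *\<^sub>R outer_normal E p"
        using nearest_point_normal[OF nf1 R False xd ne(1)] by blast
      from sd_deriv_normal[OF ub R pd(1) _ ne, of d] pd show ?thesis
        unfolding differentiable_def by auto
    next
      case True
      hence xc: "x \<notin> closure (- E)" using xnf by (simp add: frontier_closures)
      have nf2: "\<forall>p\<in>frontier (- E). norm (- outer_normal E p) = 1 \<and>
          ball (p + R *\<^sub>R (- outer_normal E p)) R \<subseteq> - (- E) \<and> ball (p - R *\<^sub>R (- outer_normal E p)) R \<subseteq> - E"
        using nf1 by (simp add: frontier_complement)
      have xd2: "infdist x (frontier (- E)) < R" using xd by (simp add: frontier_complement)
      obtain p d where pd: "p \<in> frontier (- E)" "0 < d" "d < R" "x = p + d *\<^sub>R (- outer_normal E p)"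
        using nearest_point_normal[OF nf2 R xc xd2 ne(2)] by blast
      have pf: "p \<in> frontier E" using pd(1) by (simp add: frontier_complement)
      have "x = p + (- d) *\<^sub>R outer_normal E p" using pd(4) by simp
      with sd_deriv_normal[OF ub R pf _ ne, of "-d"] pd show ?thesis
        unfolding differentiable_def by auto
    qed
  qed
qed



lemma nearest_exists:
  fixes K :: "'a::euclidean_space set"
  assumes "closed K" "K \<noteq> {}"
  shows "\<exists>p\<in>K. dist w p = infdist w K"
proof -
  obtain p where p: "p \<in> K" "\<And>y. y \<in> K \<Longrightarrow> dist w p \<le> dist w y"
    using distance_attains_inf[OF assms, of w] by auto
  have "infdist w K = dist w p"
    by (rule antisym) (auto intro: infdist_le[OF p(1)] infdist_geI[OF assms(2)] p(2))
  thus ?thesis using p by auto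
qed

lemma seg_nearest:
  fixes K :: "'a::euclidean_space set"
  assumes ne: "K \<noteq> {}" and p: "p \<in> K" and wp: "dist w p = infdist w K" and pos: "0 < infdist w K"
    and e: "0 \<le> e" "e \<le> infdist w K"
  shows "dist (w - (e / infdist w K) *\<^sub>R (w - p)) p = infdist w K - e"
    and "infdist (w - (e / infdist w K) *\<^sub>R (w - p)) K = infdist w K - e"
proof -
  define d where "d = infdist w K"
  define q where "q = w - (e / d) *\<^sub>R (w - p)"
  have "q - p = (1 - e/d) *\<^sub>R (w - p)" by (simp add: q_def algebra_simps)
  moreover have "1 - e/d \<ge> 0" using e pos by (simp add: d_def field_simps)
  ultimately have "dist q p = (1 - e/d) * d" using wp by (simp add: dist_norm d_def)
  also have "\<dots> = d - e" using pos by (simp add: d_def field_simps)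
  finally have qp: "dist q p = d - e" .
  have wq: "dist w q = e" using e pos wp by (simp add: q_def dist_norm d_def norm_minus_commute)
  have "d - e \<le> infdist q K"
  proof (rule infdist_geI[OF ne])
    fix k assume "k \<in> K"
    hence "d \<le> dist w k" using infdist_le by (auto simp: d_def)
    thus "d - e \<le> dist q k" using dist_triangle[of w k q] wq by simp
  qed
  moreover have "infdist q K \<le> d - e" using infdist_le[OF p, of q] qp by simp
  ultimately have "infdist q K = d - e" by simp
  thus "dist (w - (e / infdist w K) *\<^sub>R (w - p)) p = infdist w K - e"
    and "infdist (w - (e / infdist w K) *\<^sub>R (w - p)) K = infdist w K - e"
    using qp by (simp_all add: q_def d_def)
qed

lemma proj_cont:
  fixes K :: "'a::euclidean_space set"
  assumes K: "closed K" and p0: "p0 \<in> K" "dist w0 p0 = infdist w0 K"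
    and un: "\<And>q. q \<in> K \<Longrightarrow> dist w0 q = infdist w0 K \<Longrightarrow> q = p0"
    and e: "e > 0"
  shows "\<exists>\<delta>>0. \<forall>w p. dist w w0 < \<delta> \<longrightarrow> p \<in> K \<longrightarrow> dist w p = infdist w K \<longrightarrow> dist p p0 < e"
proof -
  define d0 where "d0 = infdist w0 K"
  define C where "C = K \<inter> cball w0 (d0 + 2) \<inter> {p. e \<le> dist p p0}"
  have "closed {p. e \<le> dist p p0}"
    by (rule closed_Collect_le) (auto intro!: continuous_intros)
  hence "closed C" using K by (auto simp: C_def)
  moreover have "bounded C" by (auto simp: C_def intro: bounded_subset[OF bounded_cball])
  ultimately have cC: "compact C" by (simp add: compact_eq_bounded_closed)
  have key: "dist w0 p \<le> d0 + 2" if "dist w w0 < 1" "dist w p = infdist w K" for w p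
  proof -
    have "infdist w K \<le> d0 + dist w w0" using infdist_triangle[of w K w0] by (simp add: d0_def)
    thus ?thesis using that dist_triangle[of w0 p w] by (simp add: dist_commute)
  qed
  show ?thesis
  proof (cases "C = {}")
    case True
    show ?thesis
    proof (intro exI[of _ 1] conjI allI impI)
      fix w p assume h: "dist w w0 < 1" "p \<in> K" "dist w p = infdist w K"
      have "p \<in> cball w0 (d0 + 2)" using key[OF h(1) h(3)] by simp
      thus "dist p p0 < e" using True h(2) unfolding C_def by (auto simp: not_le[symmetric])
    qed simp
  next
    case False
    have "continuous_on C (\<lambda>p. dist w0 p)" by (intro continuous_intros)
    then obtain p1 where p1: "p1 \<in> C" "\<And>y. y \<in> C \<Longrightarrow> dist w0 p1 \<le> dist w0 y"
      using continuous_attains_inf[OF cC False, of "\<lambda>p. dist w0 p"] by blast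
    define m where "m = dist w0 p1"
    have "p1 \<in> K" "e \<le> dist p1 p0" using p1 by (auto simp: C_def)
    have "d0 \<le> m" using infdist_le[OF \<open>p1 \<in> K\<close>] by (simp add: d0_def m_def)
    moreover have "m \<noteq> d0"
    proof
      assume "m = d0"
      hence "p1 = p0" using un[OF \<open>p1 \<in> K\<close>] by (simp add: m_def d0_def)
      thus False using \<open>e \<le> dist p1 p0\<close> e by simp
    qed
    ultimately have md: "d0 < m" by simp
    define \<delta> where "\<delta> = min 1 ((m - d0)/3)"
    have \<delta>: "\<delta> > 0" "\<delta> \<le> 1" "3 * \<delta> \<le> m - d0" using md by (auto simp: \<delta>_def min_def)
    show ?thesis
    proof (intro exI[of _ \<delta>] conjI allI impI)
      show "\<delta> > 0" by fact
      fix w p assume h: "dist w w0 < \<delta>" "p \<in> K" "dist w p = infdist w K"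
      show "dist p p0 < e"
      proof (rule ccontr)
        assume "\<not> dist p p0 < e"
        moreover have "p \<in> cball w0 (d0 + 2)" using key[OF _ h(3)] h(1) \<delta> by simp
        ultimately have "p \<in> C" using h(2) by (simp add: C_def)
        hence "m \<le> dist w0 p" using p1 by (simp add: m_def)
        hence "m - \<delta> \<le> dist w p" using dist_triangle[of w0 p w] h(1) by (simp add: dist_commute)
        moreover have "infdist w K \<le> d0 + \<delta>"
          using infdist_triangle[of w K w0] h(1) by (simp add: d0_def)
        ultimately show False using h(3) \<delta> md by simp
      qed
    qed
  qed
qed




lemma ray_extend:
  fixes K :: "'a::euclidean_space set"
  assumes K: "closed K" and x: "x \<in> K" and u: "norm u = 1" and r0: "0 < r0"
    and init: "\<And>t. 0 \<le> t \<Longrightarrow> t \<le> r0 \<Longrightarrow> infdist (x + t *\<^sub>R u) K = t"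
    and uniq: "\<And>z p q. 0 < infdist z K \<Longrightarrow> infdist z K < r \<Longrightarrow> p \<in> K \<Longrightarrow> q \<in> K \<Longrightarrow>
                 dist z p = infdist z K \<Longrightarrow> dist z q = infdist z K \<Longrightarrow> p = q"
    and t1: "0 \<le> t1" "t1 < r"
  shows "infdist (x + t1 *\<^sub>R u) K = t1"
proof (rule ccontr)
  assume nt1: "infdist (x + t1 *\<^sub>R u) K \<noteq> t1"
  have Kne: "K \<noteq> {}" using x by auto
  define z where "z = (\<lambda>t::real. x + t *\<^sub>R u)"
  define f where "f = (\<lambda>t. infdist (z t) K)"
  have dz: "dist (z a) (z b) = \<bar>a - b\<bar>" for a b
  proof -
    have "z a - z b = (a - b) *\<^sub>R u" by (simp add: z_def algebra_simps)
    thus ?thesis using u by (simp add: dist_norm)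
  qed
  have fle: "f t \<le> t" if "0 \<le> t" for t
    using infdist_le[OF x, of "z t"] u that by (simp add: f_def z_def dist_norm)
  have down: "f t' = t'" if "f T = T" "0 \<le> t'" "t' \<le> T" for T t'
  proof -
    have "f T \<le> f t' + dist (z T) (z t')" unfolding f_def by (rule infdist_triangle)
    hence "t' \<le> f t'" using that dz[of T t'] by simp
    thus ?thesis using fle[OF that(2)] by simp
  qed
  define B where "B = {t. 0 \<le> t \<and> t \<le> t1 \<and> f t = t}"
  have contf: "continuous_on UNIV f"
    unfolding f_def z_def by (intro continuous_intros)
  have "closed B"
  proof -
    have "closed {t::real. 0 \<le> t}" by (rule closed_Collect_le) (auto intro: continuous_intros)
    moreover have "closed {t::real. t \<le> t1}" by (rule closed_Collect_le) (auto intro: continuous_intros)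
    moreover have "closed {t. f t = t}" by (rule closed_Collect_eq[OF contf]) (auto intro: continuous_intros)
    ultimately have "closed ({t::real. 0 \<le> t} \<inter> {t. t \<le> t1} \<inter> {t. f t = t})" by auto
    moreover have "B = {t::real. 0 \<le> t} \<inter> {t. t \<le> t1} \<inter> {t. f t = t}" by (auto simp: B_def)
    ultimately show ?thesis by simp
  qed
  have "0 \<in> B" using t1 x by (simp add: B_def f_def z_def)
  hence Bne: "B \<noteq> {}" by auto
  have Bbdd: "bdd_above B" by (auto simp: B_def bdd_above_def)
  define T where "T = Sup B"
  have TB: "T \<in> B" using closed_contains_Sup[OF Bne Bbdd \<open>closed B\<close>] by (simp add: T_def)
  have Tmax: "t \<le> T" if "t \<in> B" for t using cSup_upper[OF that Bbdd] by (simp add: T_def)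
  have "t1 \<notin> B" using nt1 by (simp add: B_def f_def z_def)
  hence Tt1: "T < t1" using TB by (auto simp: B_def) (metis B_def TB mem_Collect_eq order_le_less)
  have "r0 < t1"
  proof (rule ccontr)
    assume "\<not> r0 < t1"
    hence "f t1 = t1" using init[of t1] t1 by (simp add: f_def z_def)
    thus False using nt1 by (simp add: f_def z_def)
  qed
  hence "r0 \<in> B" using init[of r0] r0 by (simp add: B_def f_def z_def)
  hence Tr0: "r0 \<le> T" using Tmax by blast
  have fT: "f T = T" and T0: "0 \<le> T" using TB by (auto simp: B_def)
  define e where "e = T / 2"
  have e: "0 < e" "e < T" using Tr0 r0 by (auto simp: e_def)
  define d where "d = (\<lambda>w. infdist w K)"
  have nearest: "\<exists>p\<in>K. dist w p = d w" for w using nearest_exists[OF K Kne] by (simp add: d_def)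
  define \<pi> where "\<pi> = (\<lambda>w. SOME p. p \<in> K \<and> dist w p = d w)"
  have pi: "\<pi> w \<in> K" "dist w (\<pi> w) = d w" for w
    using someI_ex[OF nearest[of w, unfolded Bex_def]] by (auto simp: \<pi>_def)
  define U where "U = {w. e < d w \<and> d w < r}"
  have contd: "continuous_on UNIV d" unfolding d_def by (intro continuous_intros)
  have "open U"
  proof -
    have "open {w. e < d w}" by (rule open_Collect_less) (auto intro: contd continuous_intros)
    moreover have "open {w. d w < r}" by (rule open_Collect_less) (auto intro: contd continuous_intros)
    ultimately show ?thesis by (simp add: U_def Collect_conj_eq open_Int)
  qed
  have Uuniq: "p = q" if "0 < d w" "d w < r" "p \<in> K" "q \<in> K" "dist w p = d w" "dist w q = d w" for w p q
    using uniq that by (simp add: d_def)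
  have picont: "isCont \<pi> w" if "w \<in> U" for w
    unfolding continuous_at_eps_delta
  proof (intro allI impI)
    fix \<epsilon> :: real assume "\<epsilon> > 0"
    have wU: "0 < d w" "d w < r" using that e by (auto simp: U_def)
    obtain \<delta> where \<delta>: "\<delta> > 0" "\<forall>w' p. dist w' w < \<delta> \<longrightarrow> p \<in> K \<longrightarrow> dist w' p = infdist w' K \<longrightarrow> dist p (\<pi> w) < \<epsilon>"
      using proj_cont[OF K pi(1) pi(2)[unfolded d_def] _ \<open>\<epsilon> > 0\<close>, of w] Uuniq[OF wU pi(1)[of w] _ pi(2)[of w]]
      by (auto simp: d_def)
    show "\<exists>\<delta>>0. \<forall>x'. dist x' w < \<delta> \<longrightarrow> dist (\<pi> x') (\<pi> w) < \<epsilon>"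
      using \<delta> pi by (auto simp: d_def)
  qed
  define H where "H = (\<lambda>w. w - (e / d w) *\<^sub>R (w - \<pi> w))"
  have contH: "continuous_on U H"
  proof (rule continuous_at_imp_continuous_on, rule ballI)
    fix w assume wU: "w \<in> U"
    have "d w \<noteq> 0" using wU e by (auto simp: U_def)
    moreover have "isCont d w" unfolding d_def by (intro continuous_intros)
    ultimately show "isCont H w" unfolding H_def
      by (intro continuous_intros picont[OF wU]) auto
  qed
  have Hseg: "d (H w) = d w - e" "dist (H w) (\<pi> w) = d w - e" if "w \<in> U" for w
  proof -
    have "0 < d w" "e \<le> d w" using that e by (auto simp: U_def)
    thus "d (H w) = d w - e" "dist (H w) (\<pi> w) = d w - e"
      using seg_nearest[OF Kne pi(1) pi(2)[unfolded d_def], of w e] e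
      by (simp_all add: H_def d_def)
  qed
  have Hinv: "w = \<pi> w + (d w / (d w - e)) *\<^sub>R (H w - \<pi> w)" if "w \<in> U" for w
  proof -
    have dpos: "d w - e > 0" "d w > 0" using that e by (auto simp: U_def)
    have "H w - \<pi> w = (1 - e / d w) *\<^sub>R (w - \<pi> w)" by (simp add: H_def algebra_simps)
    also have "1 - e / d w = (d w - e) / d w" using dpos by (simp add: field_simps)
    finally have "(d w / (d w - e)) *\<^sub>R (H w - \<pi> w) = w - \<pi> w" using dpos by simp
    thus ?thesis by simp
  qed
  have "inj_on H U"
  proof (rule inj_onI)
    fix w1 w2 assume w: "w1 \<in> U" "w2 \<in> U" "H w1 = H w2"
    have d12: "d w1 = d w2" using Hseg(1)[OF w(1)] Hseg(1)[OF w(2)] w(3) by simp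
    have q: "0 < d (H w1)" "d (H w1) < r" using Hseg(1)[OF w(1)] w(1) e by (auto simp: U_def)
    have "\<pi> w1 = \<pi> w2"
      by (rule Uuniq[OF q pi(1) pi(1)]) (use Hseg[OF w(1)] Hseg[OF w(2)] w(3) d12 in auto)
    thus "w1 = w2" using Hinv[OF w(1)] Hinv[OF w(2)] w(3) d12 by metis
  qed
  have oHU: "open (H ` U)" by (rule invariance_of_domain[OF contH \<open>open U\<close> \<open>inj_on H U\<close>])
  have dzT: "d (z T) = T" using fT by (simp add: f_def d_def)
  have zTU: "z T \<in> U" using dzT e Tt1 t1 by (simp add: U_def)
  have pizT: "\<pi> (z T) = x"
    by (rule Uuniq[of "z T"]) (use dzT pi[of "z T"] x e dz[of T 0] Tt1 t1 T0 in \<open>auto simp: z_def\<close>)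
  have HzT: "H (z T) = z (T - e)"
    using dzT pizT e by (simp add: H_def z_def algebra_simps)
  obtain \<delta> where \<delta>: "\<delta> > 0" "ball (z (T - e)) \<delta> \<subseteq> H ` U"
    using oHU zTU HzT unfolding open_contains_ball by (metis imageI)
  define \<delta>' where "\<delta>' = min (\<delta>/2) (min (t1 - T) e)"
  have \<delta>': "0 < \<delta>'" "\<delta>' < \<delta>" "\<delta>' \<le> t1 - T" "\<delta>' \<le> e" using \<delta> Tt1 e by (auto simp: \<delta>'_def)
  have "z (T - e + \<delta>') \<in> ball (z (T - e)) \<delta>" using dz \<delta>' by (simp add: dist_commute)
  then obtain w where wU: "w \<in> U" and Hw: "H w = z (T - e + \<delta>')" using \<delta> by auto
  have fz': "f (T - e + \<delta>') = T - e + \<delta>'" by (rule down[OF fT]) (use \<delta>' e in auto)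
  hence dz': "d (z (T - e + \<delta>')) = T - e + \<delta>'" by (simp add: f_def d_def)
  have dw: "d w = T + \<delta>'" using Hseg(1)[OF wU] Hw dz' by simp
  have "\<pi> w = x"
  proof (rule Uuniq[of "z (T - e + \<delta>')"])
    show "0 < d (z (T - e + \<delta>'))" "d (z (T - e + \<delta>')) < r" using dz' \<delta>' e Tt1 t1 by auto
    show "\<pi> w \<in> K" "x \<in> K" using pi x by auto
    show "dist (z (T - e + \<delta>')) (\<pi> w) = d (z (T - e + \<delta>'))" using Hseg(2)[OF wU] Hw dz' dw by simp
    show "dist (z (T - e + \<delta>')) x = d (z (T - e + \<delta>'))" using dz' dz[of "T - e + \<delta>'" 0] \<delta>' e
      by (simp add: z_def)
  qed
  note pw = this
  have "w = \<pi> w + (d w / (d w - e)) *\<^sub>R (H w - \<pi> w)" by (rule Hinv[OF wU])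
  also have "\<dots> = z (T + \<delta>')"
  proof -
    have "T + \<delta>' - e > 0" using \<delta>' e by simp
    hence c: "(T + \<delta>') * (T - e + \<delta>') / (T + \<delta>' - e) = T + \<delta>'" by (simp add: field_simps)
    show ?thesis using pw Hw dw c by (simp add: z_def)
  qed
  finally have "f (T + \<delta>') = T + \<delta>'" using dw by (simp add: f_def d_def)
  hence "T + \<delta>' \<in> B" using \<delta>' T0 by (simp add: B_def)
  thus False using Tmax \<delta>' by fastforce
qed



lemma le_eps:
  fixes a b c :: real
  assumes "\<And>\<epsilon>. \<epsilon> > 0 \<Longrightarrow> a \<le> b + \<epsilon> * c" "c \<ge> 0"
  shows "a \<le> b"
proof (rule ccontr)
  assume "\<not> a \<le> b"
  define \<epsilon> where "\<epsilon> = (a - b) / (2 * (c + 1))"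
  have "\<epsilon> > 0" using \<open>\<not> a \<le> b\<close> assms(2) by (simp add: \<epsilon>_def)
  have "\<epsilon> * c < a - b"
  proof -
    have "\<epsilon> * c \<le> \<epsilon> * (c + 1)" using \<open>\<epsilon> > 0\<close> by simp
    also have "\<dots> = (a - b) / 2"
    proof -
      have "c + 1 > 0" using assms(2) by simp
      thus ?thesis by (simp add: \<epsilon>_def field_simps)
    qed
    finally show ?thesis using \<open>\<not> a \<le> b\<close> by simp
  qed
  thus False using assms(1)[OF \<open>\<epsilon> > 0\<close>] by simp
qed

lemma diff_unique_nearest:
  fixes K :: "'a::euclidean_space set"
  assumes K: "closed K" and z: "0 < infdist z K"
    and dif: "(\<lambda>w. infdist w K) differentiable (at z)"
    and p: "p \<in> K" "dist z p = infdist z K" and q: "q \<in> K" "dist z q = infdist z K"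
  shows "p = q"
proof -
  define d where "d = infdist z K"
  define f where "f = (\<lambda>w. infdist w K)"
  obtain D where D: "(f has_derivative D) (at z)" using dif unfolding differentiable_def f_def by blast
  have bl: "bounded_linear D" using D by (simp add: has_derivative_at_alt)
  have Dle: "D w \<le> norm w" for w
  proof (cases "w = 0")
    case True thus ?thesis using bl by (simp add: linear_simps)
  next
    case False
    show ?thesis
    proof (rule le_eps[where c = "norm w"])
      fix \<epsilon> :: real assume e: "\<epsilon> > 0"
      obtain \<delta> where \<delta>: "\<delta> > 0" "\<forall>y. norm (y - z) < \<delta> \<longrightarrow> norm (f y - f z - D (y - z)) \<le> \<epsilon> * norm (y - z)"
        using D e unfolding has_derivative_at_alt by blast
      define t where "t = \<delta> / (2 * norm w)"
      have t: "t > 0" "norm (t *\<^sub>R w) < \<delta>" using \<delta> False by (auto simp: t_def)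
      have "\<bar>f (z + t *\<^sub>R w) - f z - D (t *\<^sub>R w)\<bar> \<le> \<epsilon> * norm (t *\<^sub>R w)"
        using \<delta>(2)[rule_format, of "z + t *\<^sub>R w"] t by simp
      moreover have "f (z + t *\<^sub>R w) - f z \<le> norm (t *\<^sub>R w)"
        using infdist_triangle[of "z + t *\<^sub>R w" K z] by (simp add: f_def dist_norm)
      moreover have "D (t *\<^sub>R w) = t * D w" using bl by (simp add: linear_simps)
      ultimately have "t * D w \<le> t * (norm w + \<epsilon> * norm w)" using t by (simp add: algebra_simps)
      thus "D w \<le> norm w + \<epsilon> * norm w" using t by simp
    qed simp
  qed
  have Dv: "D ((1/d) *\<^sub>R (z - a)) = 1" if a: "a \<in> K" "dist z a = d" for a
  proof -
    define v where "v = (1/d) *\<^sub>R (z - a)"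
    have dpos: "d > 0" using z by (simp add: d_def)
    have nv: "norm v = 1" using a dpos by (simp add: v_def dist_norm)
    have fz: "f (z - t *\<^sub>R v) = d - t" if "0 \<le> t" "t \<le> d" for t
    proof (rule antisym)
      have "z - t *\<^sub>R v - a = (1 - t/d) *\<^sub>R (z - a)" by (simp add: v_def algebra_simps)
      also have "1 - t/d = (d - t)/d" using dpos by (simp add: field_simps)
      finally have "norm (z - t *\<^sub>R v - a) = \<bar>(d - t)/d\<bar> * d" using a by (simp add: dist_norm)
      also have "\<dots> = d - t" using dpos that by simp
      finally have "dist (z - t *\<^sub>R v) a = d - t" by (simp add: dist_norm)
      thus "f (z - t *\<^sub>R v) \<le> d - t" using infdist_le[OF a(1), of "z - t *\<^sub>R v"] by (simp add: f_def)
      show "d - t \<le> f (z - t *\<^sub>R v)"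
        using infdist_triangle[of z K "z - t *\<^sub>R v"] nv that by (simp add: f_def d_def dist_norm)
    qed
    have "\<bar>D v - 1\<bar> \<le> 0"
    proof (rule le_eps[where c = 1])
      fix \<epsilon> :: real assume e: "\<epsilon> > 0"
      obtain \<delta> where \<delta>: "\<delta> > 0" "\<forall>y. norm (y - z) < \<delta> \<longrightarrow> norm (f y - f z - D (y - z)) \<le> \<epsilon> * norm (y - z)"
        using D e unfolding has_derivative_at_alt by blast
      define t where "t = min (\<delta>/2) d"
      have t: "t > 0" "t \<le> d" "norm (t *\<^sub>R v) < \<delta>" using \<delta> dpos nv by (auto simp: t_def)
      have "\<bar>f (z - t *\<^sub>R v) - f z - D (- (t *\<^sub>R v))\<bar> \<le> \<epsilon> * norm (t *\<^sub>R v)"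
        using \<delta>(2)[rule_format, of "z - t *\<^sub>R v"] t by simp
      moreover have "D (- (t *\<^sub>R v)) = - t * D v" using bl by (simp add: linear_simps)
      moreover have "f z = d" by (simp add: f_def d_def)
      ultimately have "\<bar>t * (D v - 1)\<bar> \<le> t * \<epsilon>" using fz[of t] t nv by (simp add: algebra_simps)
      hence "t * \<bar>D v - 1\<bar> \<le> t * \<epsilon>" using t by (simp add: abs_mult)
      thus "\<bar>D v - 1\<bar> \<le> 0 + \<epsilon> * 1" using t by simp
    qed simp
    thus ?thesis by (simp add: v_def)
  qed
  define vp where "vp = (1/d) *\<^sub>R (z - p)"
  define vq where "vq = (1/d) *\<^sub>R (z - q)"
  have dpos: "d > 0" using z by (simp add: d_def)
  have nvp: "norm vp = 1" and nvq: "norm vq = 1" using p q dpos by (auto simp: vp_def vq_def dist_norm d_def)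
  have "D (vp + vq) = 2" using Dv[OF p(1)] Dv[OF q(1)] p q bl by (simp add: vp_def vq_def d_def linear_simps)
  hence "2 \<le> norm (vp + vq)" using Dle[of "vp + vq"] by simp
  hence "4 \<le> (norm (vp + vq))^2"
    by (metis power2_eq_square mult_mono norm_ge_zero numeral_Bit0 mult_2_right zero_le_numeral
        numeral_times_numeral semiring_norm(12) pos2 less_imp_le)
  hence "4 \<le> 2 + 2 * (vp \<bullet> vq)" using nvp nvq
    by (simp add: power2_norm_eq_inner inner_add_left inner_add_right inner_commute norm_eq_1)
  hence "(norm (vp - vq))^2 \<le> 0" using nvp nvq
    by (simp add: power2_norm_eq_inner inner_diff_left inner_diff_right inner_commute norm_eq_1)
  hence "vp = vq" by simp
  thus "p = q" using dpos by (simp add: vp_def vq_def)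
qed

lemma side_bound:
  fixes F :: "'a::euclidean_space set"
  assumes x: "x \<in> frontier F" and u: "norm u = 1" and r0: "0 < r0"
    and b: "ball (x + r0 *\<^sub>R u) r0 \<subseteq> - F" and ne: "F \<noteq> {}"
    and dif: "\<forall>z. infdist z (frontier F) < r \<longrightarrow> signed_dist F differentiable (at z)"
    and y: "y \<in> frontier F" and t: "0 \<le> t" "t < r"
  shows "t \<le> dist (x + t *\<^sub>R u) y"
proof -
  define K where "K = closure F"
  have K: "closed K" by (simp add: K_def)
  have xK: "x \<in> K" using x by (simp add: K_def frontier_def)
  have bK: "ball (x + r0 *\<^sub>R u) r0 \<inter> K = {}"
    unfolding K_def using b open_Int_closure_eq_empty[of "ball (x + r0 *\<^sub>R u) r0" F] by auto
  have init: "infdist (x + s *\<^sub>R u) K = s" if "0 \<le> s" "s \<le> r0" for s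
  proof (rule antisym)
    show "infdist (x + s *\<^sub>R u) K \<le> s" using infdist_le[OF xK, of "x + s *\<^sub>R u"] u that
      by (simp add: dist_norm)
    show "s \<le> infdist (x + s *\<^sub>R u) K"
    proof (rule infdist_geI)
      show "K \<noteq> {}" using xK by auto
      fix k assume "k \<in> K"
      hence "k \<notin> ball (x + r0 *\<^sub>R u) r0" using bK by blast
      hence "r0 \<le> dist (x + r0 *\<^sub>R u) k" by (simp add: not_less)
      moreover have "dist (x + s *\<^sub>R u) (x + r0 *\<^sub>R u) = r0 - s"
      proof -
        have "(x + s *\<^sub>R u) - (x + r0 *\<^sub>R u) = (s - r0) *\<^sub>R u" by (simp add: algebra_simps)
        thus ?thesis using u that by (simp add: dist_norm)
      qed
      ultimately show "s \<le> dist (x + s *\<^sub>R u) k"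
        using dist_triangle[of "x + r0 *\<^sub>R u" k "x + s *\<^sub>R u"] by (simp add: dist_commute)
    qed
  qed
  have uniq: "p = q" if h: "0 < infdist z K" "infdist z K < r" "p \<in> K" "q \<in> K"
     "dist z p = infdist z K" "dist z q = infdist z K" for z p q
  proof (rule diff_unique_nearest[OF K h(1) _ h(3,5) h(4,6)])
    have zK: "z \<notin> K" using h(1) by auto
    have "p \<in> frontier F"
      by (rule nearest_in_frontier) (use zK h infdist_le in \<open>auto simp: K_def\<close>)
    hence "infdist z (frontier F) < r" using infdist_le[of p "frontier F" z] h by simp
    then obtain D where D: "(signed_dist F has_derivative D) (at z)"
      using dif unfolding differentiable_def by blast
    have "((\<lambda>w. infdist w K) has_derivative D) (at z)"
    proof (rule has_derivative_transform_within_open[OF D])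
      show "open (- K)" using K by auto
      show "z \<in> - K" using zK by simp
      fix w assume "w \<in> - K"
      hence "w \<in> - F" using closure_subset[of F] by (auto simp: K_def)
      thus "signed_dist F w = infdist w K"
        by (simp add: signed_dist_def K_def infdist_closure_eq)
    qed
    thus "(\<lambda>w. infdist w K) differentiable (at z)" unfolding differentiable_def by blast
  qed
  have "infdist (x + t *\<^sub>R u) K = t"
    by (rule ray_extend[OF K xK u r0 init uniq t]) auto
  moreover have "y \<in> K" using y by (simp add: K_def frontier_def)
  ultimately show ?thesis using infdist_le by metis
qed



lemma norm_sq_comb:
  fixes w n :: "'a::euclidean_space"
  assumes "norm n = 1"
  shows "(norm (w + c *\<^sub>R n))^2 = (norm w)^2 + 2 * c * (w \<bullet> n) + c^2"
proof -
  have "n \<bullet> n = 1" using assms by (simp add: norm_eq_1)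
  thus ?thesis unfolding power2_norm_eq_inner
    by (simp add: inner_add_left inner_add_right inner_commute algebra_simps power2_eq_square)
qed

lemma frontier_not_in_balls:
  fixes E :: "'a::euclidean_space set"
  assumes ub: "ubn E R" and x: "x \<in> frontier E" and y: "y \<in> frontier E"
  shows "y \<notin> ball (x + R *\<^sub>R outer_normal E x) R" "y \<notin> ball (x - R *\<^sub>R outer_normal E x) R"
proof -
  have b1: "ball (x + R *\<^sub>R outer_normal E x) R \<subseteq> - E" and b2: "ball (x - R *\<^sub>R outer_normal E x) R \<subseteq> E"
    using ub x by (auto simp: ubn_def)
  have "ball (x + R *\<^sub>R outer_normal E x) R \<inter> closure E = {}"
    using b1 open_Int_closure_eq_empty[of "ball (x + R *\<^sub>R outer_normal E x) R" E] by auto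
  moreover have "y \<in> closure E" using y by (simp add: frontier_def)
  ultimately show "y \<notin> ball (x + R *\<^sub>R outer_normal E x) R" by blast
  have "ball (x - R *\<^sub>R outer_normal E x) R \<subseteq> interior E" using b2 by (simp add: interior_maximal)
  moreover have "y \<notin> interior E" using y by (simp add: frontier_def)
  ultimately show "y \<notin> ball (x - R *\<^sub>R outer_normal E x) R" by blast
qed

lemma S_bound_ubn:
  fixes E :: "'a::euclidean_space set"
  assumes ub: "ubn E R" and R: "R > 0" and x: "x \<in> frontier E" and y: "y \<in> frontier E" and xy: "x \<noteq> y"
  shows "2 * R * \<bar>(x - y) \<bullet> outer_normal E x\<bar> \<le> (norm (x - y))^2"
proof -
  define n where "n = outer_normal E x"
  have n: "norm n = 1" using ub x by (simp add: ubn_def n_def)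
  have "R \<le> dist (x + R *\<^sub>R n) y" "R \<le> dist (x - R *\<^sub>R n) y"
    using frontier_not_in_balls[OF ub x y] by (auto simp: n_def not_less)
  hence "R \<le> norm ((x - y) + R *\<^sub>R n)" "R \<le> norm ((x - y) + (-R) *\<^sub>R n)"
    by (auto simp: dist_norm algebra_simps)
  hence "R^2 \<le> (norm ((x - y) + R *\<^sub>R n))^2" "R^2 \<le> (norm ((x - y) + (-R) *\<^sub>R n))^2"
    using R by (auto intro!: power_mono)
  hence "R^2 \<le> (norm (x - y))^2 + 2 * R * ((x - y) \<bullet> n) + R^2"
        "R^2 \<le> (norm (x - y))^2 + 2 * (-R) * ((x - y) \<bullet> n) + (-R)^2"
    unfolding norm_sq_comb[OF n] by auto
  thus ?thesis by (simp add: n_def abs_if)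
qed

lemma S_kernel_abs:
  "\<bar>S_kernel E x y\<bar> = \<bar>(x - y) \<bullet> outer_normal E x\<bar> / (norm (x - y))^2"
  by (simp add: S_kernel_def abs_divide)

lemma ubn_from_S:
  fixes E :: "'a::euclidean_space set"
  assumes ub0: "ubn E r0" and r0: "r0 > 0" and R: "R > 0"
    and Sb: "\<And>x y. x \<in> frontier E \<Longrightarrow> y \<in> frontier E \<Longrightarrow> x \<noteq> y \<Longrightarrow>
              2 * R * \<bar>(x - y) \<bullet> outer_normal E x\<bar> \<le> (norm (x - y))^2"
  shows "ubn E R"
  unfolding ubn_def
proof (intro ballI conjI)
  fix x assume x: "x \<in> frontier E"
  define n where "n = outer_normal E x"
  have n: "norm n = 1" and b01: "ball (x + r0 *\<^sub>R n) r0 \<subseteq> - E" and b02: "ball (x - r0 *\<^sub>R n) r0 \<subseteq> E"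
    using ub0 x by (auto simp: ubn_def n_def)
  show "norm (outer_normal E x) = 1" using n by (simp add: n_def)
  define t where "t = min r0 R"
  have t: "0 < t" "t \<le> r0" "t \<le> R" using r0 R by (auto simp: t_def)
  have dd: "dist (x + c *\<^sub>R n) (x + s *\<^sub>R n) = \<bar>c - s\<bar>" for c s
  proof -
    have "(x + c *\<^sub>R n) - (x + s *\<^sub>R n) = (c - s) *\<^sub>R n" by (simp add: algebra_simps)
    thus ?thesis using n by (simp add: dist_norm)
  qed
  have nf: "ball (x + c *\<^sub>R n) R \<inter> frontier E = {}" if c: "c = R \<or> c = -R" for c
  proof (rule ccontr)
    assume "ball (x + c *\<^sub>R n) R \<inter> frontier E \<noteq> {}"
    then obtain y where y: "y \<in> frontier E" "dist (x + c *\<^sub>R n) y < R" by auto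
    have "x \<noteq> y" using y(2) dd[of c 0] c R by auto
    have "norm ((x - y) + c *\<^sub>R n) < R" using y(2) by (simp add: dist_norm algebra_simps)
    hence "(norm ((x - y) + c *\<^sub>R n))^2 < R^2" using R by (simp add: power_strict_mono)
    hence lt: "(norm (x - y))^2 + 2 * c * ((x - y) \<bullet> n) + c^2 < R^2" by (simp add: norm_sq_comb[OF n])
    have "2 * R * \<bar>(x - y) \<bullet> n\<bar> \<le> (norm (x - y))^2" using Sb[OF x y(1) \<open>x \<noteq> y\<close>] by (simp add: n_def)
    moreover have "c^2 = R^2" using c by auto
    moreover have "- (2 * R * \<bar>(x - y) \<bullet> n\<bar>) \<le> 2 * c * ((x - y) \<bullet> n)"
      using c R by (auto simp: abs_if)
    ultimately show False using lt by linarith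
  qed
  have in1: "x + t *\<^sub>R n \<in> ball (x + R *\<^sub>R n) R" "x + t *\<^sub>R n \<in> ball (x + r0 *\<^sub>R n) r0"
    using dd[of R t] dd[of r0 t] t n by (simp_all add: mem_ball)
  have "ball (x + R *\<^sub>R n) R - E \<noteq> {}" using in1 b01 by blast
  hence "ball (x + R *\<^sub>R n) R \<inter> E = {}"
    using connected_Int_frontier[OF connected_ball] nf[of R] by blast
  thus "ball (x + R *\<^sub>R outer_normal E x) R \<subseteq> - E" by (auto simp: n_def)
  have in2: "x + (-t) *\<^sub>R n \<in> ball (x + (-R) *\<^sub>R n) R" "x + (-t) *\<^sub>R n \<in> ball (x - r0 *\<^sub>R n) r0"
    using dd[of "-R" "-t"] dd[of "-r0" "-t"] t n by (simp_all add: mem_ball)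
  have "ball (x + (-R) *\<^sub>R n) R \<inter> E \<noteq> {}" using in2 b02 by blast
  hence "ball (x + (-R) *\<^sub>R n) R - E = {}"
    using connected_Int_frontier[OF connected_ball] nf[of "-R"] by blast
  thus "ball (x - R *\<^sub>R outer_normal E x) R \<subseteq> E" by (auto simp: n_def)
qed

lemma normal_lipschitz:
  fixes E :: "'a::euclidean_space set"
  assumes ub: "ubn E R" and R: "R > 0" and x: "x \<in> frontier E" and y: "y \<in> frontier E"
  shows "R * norm (outer_normal E x - outer_normal E y) \<le> norm (x - y)"
proof -
  define nx where "nx = outer_normal E x"
  define ny where "ny = outer_normal E y"
  have nx: "norm nx = 1" "ball (x + R *\<^sub>R nx) R \<subseteq> - E" "ball (x - R *\<^sub>R nx) R \<subseteq> E"
    using ub x by (auto simp: ubn_def nx_def)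
  have ny: "norm ny = 1" "ball (y + R *\<^sub>R ny) R \<subseteq> - E" "ball (y - R *\<^sub>R ny) R \<subseteq> E"
    using ub y by (auto simp: ubn_def ny_def)
  have "ball (x - R *\<^sub>R nx) R \<inter> ball (y + R *\<^sub>R ny) R = {}" using nx ny by blast
  hence d1: "R + R \<le> dist (x - R *\<^sub>R nx) (y + R *\<^sub>R ny)" using disjoint_balls_dist R by blast
  have "ball (x + R *\<^sub>R nx) R \<inter> ball (y - R *\<^sub>R ny) R = {}" using nx ny by blast
  hence d2: "R + R \<le> dist (x + R *\<^sub>R nx) (y - R *\<^sub>R ny)" using disjoint_balls_dist R by blast
  define a where "a = x - y"
  define b where "b = nx + ny"
  have e1: "dist (x - R *\<^sub>R nx) (y + R *\<^sub>R ny) = norm (a - R *\<^sub>R b)"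
    by (simp add: a_def b_def dist_norm algebra_simps)
  have e2: "dist (x + R *\<^sub>R nx) (y - R *\<^sub>R ny) = norm (a + R *\<^sub>R b)"
    by (simp add: a_def b_def dist_norm algebra_simps)
  have "(2*R)^2 \<le> (norm (a - R *\<^sub>R b))^2" using d1 e1 R by (intro power_mono) auto
  moreover have "(2*R)^2 \<le> (norm (a + R *\<^sub>R b))^2" using d2 e2 R by (intro power_mono) auto
  moreover have "(norm (a - R *\<^sub>R b))^2 + (norm (a + R *\<^sub>R b))^2 = 2 * (a \<bullet> a) + 2 * R^2 * (b \<bullet> b)"
    unfolding power2_norm_eq_inner
    by (simp add: inner_add_left inner_add_right inner_diff_left inner_diff_right inner_commute
        algebra_simps power2_eq_square)
  moreover have "b \<bullet> b = 4 - (norm (nx - ny))^2"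
    using nx(1) ny(1) unfolding power2_norm_eq_inner
    by (simp add: b_def inner_add_left inner_add_right inner_diff_left inner_diff_right inner_commute norm_eq_1)
  ultimately have "R^2 * (norm (nx - ny))^2 \<le> a \<bullet> a"
    by (simp add: power2_eq_square algebra_simps)
  hence "(R * norm (nx - ny))^2 \<le> (norm a)^2" by (simp add: power2_norm_eq_inner power_mult_distrib)
  hence "R * norm (nx - ny) \<le> norm a" using R by (meson norm_ge_zero power2_le_imp_le)
  thus ?thesis by (simp add: a_def nx_def ny_def)
qed



lemma C2_normal_diff:
  fixes E :: "'a::euclidean_space set"
  assumes C2: "C2_regular E" and x: "x \<in> frontier E"
  shows "\<exists>L. (outer_normal E has_derivative L) (at x within frontier E)"
proof -
  obtain r \<phi> g g' where r: "r > 0" and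
    A: "\<forall>y\<in>ball x r. (\<phi> has_derivative (\<lambda>h. g y \<bullet> h)) (at y) \<and> (g has_derivative g' y) (at y) \<and> g y \<noteq> 0"
    and int: "interior E \<inter> ball x r = {y \<in> ball x r. \<phi> y < 0}"
    and fr: "frontier E \<inter> ball x r = {y \<in> ball x r. \<phi> y = 0}"
    using C2 x unfolding C2_regular_def by blast
  have dphi: "\<And>y. y \<in> ball x r \<Longrightarrow> (\<phi> has_derivative (\<lambda>h. g y \<bullet> h)) (at y)"
    and dg: "\<And>y. y \<in> ball x r \<Longrightarrow> (g has_derivative g' y) (at y)"
    and gnz: "\<And>y. y \<in> ball x r \<Longrightarrow> g y \<noteq> 0" using A by auto
  define N where "N = (\<lambda>y. inverse (norm (g y)) *\<^sub>R g y)"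
  have Nn: "is_outer_normal E y (N y)" if y: "y \<in> frontier E" "y \<in> ball x r" for y
    unfolding is_outer_normal_def
  proof (intro conjI allI impI)
    have gy: "g y \<noteq> 0" using gnz y by simp
    show "norm (N y) = 1" using gy by (simp add: N_def)
    fix \<epsilon> :: real assume e: "\<epsilon> > 0"
    have py: "\<phi> y = 0" using fr y by blast
    define e' where "e' = \<epsilon> * norm (g y) / 2"
    have e': "e' > 0" using e gy by (simp add: e'_def)
    obtain d1 where d1: "d1 > 0" "\<forall>z. norm (z - y) < d1 \<longrightarrow> norm (\<phi> z - \<phi> y - g y \<bullet> (z - y)) \<le> e' * norm (z - y)"
      using dphi[OF y(2)] e' unfolding has_derivative_at_alt by blast
    define d where "d = min d1 (r - dist x y)"
    have d: "d > 0" using d1 y(2) by (simp add: d_def)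
    show "\<exists>\<delta>>0. \<forall>z\<in>ball y \<delta>. (\<epsilon> * norm (z - y) < (z - y) \<bullet> N y \<longrightarrow> z \<notin> E) \<and>
           ((z - y) \<bullet> N y < - \<epsilon> * norm (z - y) \<longrightarrow> z \<in> E)"
    proof (intro exI[of _ d] conjI ballI impI)
      show "d > 0" by fact
      fix z assume z: "z \<in> ball y d"
      have zr: "z \<in> ball x r" using z dist_triangle[of x z y] by (auto simp: d_def dist_commute)
      have "norm (z - y) < d1" using z by (simp add: d_def dist_norm norm_minus_commute)
      hence est: "\<bar>\<phi> z - g y \<bullet> (z - y)\<bar> \<le> e' * norm (z - y)" using d1 py by simp
      hence est1: "\<phi> z - g y \<bullet> (z - y) \<le> e' * norm (z - y)"
        and est2: "g y \<bullet> (z - y) - \<phi> z \<le> e' * norm (z - y)" by (simp_all add: abs_le_iff)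
      have ee: "e' * norm (z - y) = (\<epsilon> * norm (z - y) * norm (g y)) / 2" by (simp add: e'_def)
      have e0: "0 \<le> \<epsilon> * norm (z - y) * norm (g y)" using e by simp
      have inN: "(z - y) \<bullet> N y = (g y \<bullet> (z - y)) / norm (g y)"
        by (simp add: N_def inner_commute divide_inverse mult.commute)
      {
        assume h: "\<epsilon> * norm (z - y) < (z - y) \<bullet> N y"
        hence "\<epsilon> * norm (z - y) * norm (g y) < g y \<bullet> (z - y)"
          using gy inN by (simp add: pos_less_divide_eq)
        hence "\<phi> z > 0" using est1 est2 ee e0 by linarith
        hence "z \<notin> interior E \<inter> ball x r" "z \<notin> frontier E \<inter> ball x r"
          unfolding int fr by auto
        hence "z \<notin> interior E" "z \<notin> frontier E" using zr by auto
        thus "z \<notin> E" by (auto simp: frontier_def dest: closure_subset[THEN subsetD])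
      }
      {
        assume h: "(z - y) \<bullet> N y < - \<epsilon> * norm (z - y)"
        hence "g y \<bullet> (z - y) < - \<epsilon> * norm (z - y) * norm (g y)"
          using gy inN by (simp add: divide_less_eq)
        hence "\<phi> z < 0" using est1 est2 ee e0 by linarith
        hence "z \<in> interior E \<inter> ball x r" unfolding int using zr by auto
        hence "z \<in> interior E" by auto
        thus "z \<in> E" using interior_subset by blast
      }
    qed
  qed
  have eqN: "outer_normal E y = N y" if "y \<in> frontier E" "dist y x < r" for y
    using outer_normal_eq[OF Nn] that by (simp add: dist_commute)
  have xr: "x \<in> ball x r" using r by simp
  have "g differentiable (at x)" using dg[OF xr] unfolding differentiable_def by blast
  moreover have "(\<lambda>y. norm (g y)) differentiable (at x)"
    using differentiable_chain_at[OF \<open>g differentiable (at x)\<close> differentiable_norm_at[OF gnz[OF xr]]]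
    by (simp add: o_def)
  ultimately have "N differentiable (at x)" unfolding N_def using gnz[OF xr]
    by (intro differentiable_scaleR differentiable_inverse) auto
  then obtain L where "(N has_derivative L) (at x)" unfolding differentiable_def by blast
  hence "(N has_derivative L) (at x within frontier E)" by (rule has_derivative_at_withinI)
  hence "(outer_normal E has_derivative L) (at x within frontier E)"
    by (rule has_derivative_transform_within[OF _ r x]) (use eqN in auto)
  thus ?thesis by blast
qed



lemma norm_orth_sq:
  fixes v n :: "'a::euclidean_space"
  assumes "norm v = 1" "norm n = 1" "v \<bullet> n = 0"
  shows "(norm (a *\<^sub>R v + b *\<^sub>R n))^2 = a^2 + b^2"
proof -
  have "v \<bullet> v = 1" "n \<bullet> n = 1" "n \<bullet> v = 0" "v \<bullet> n = 0" using assms by (auto simp: norm_eq_1 inner_commute)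
  thus ?thesis unfolding power2_norm_eq_inner
    by (simp add: inner_add_left inner_add_right power2_eq_square)
qed

lemma tangent_point:
  fixes E :: "'a::euclidean_space set"
  assumes ub: "ubn E R" and R: "R > 0" and x: "x \<in> frontier E"
    and v: "norm v = 1" "v \<bullet> outer_normal E x = 0" and t: "0 < t" "t < R"
  shows "\<exists>y\<in>frontier E. norm (y - x - t *\<^sub>R v) \<le> t^2 / R"
proof -
  define n where "n = outer_normal E x"
  have n: "norm n = 1" and b1: "ball (x + R *\<^sub>R n) R \<subseteq> - E" and b2: "ball (x - R *\<^sub>R n) R \<subseteq> E"
    using ub x by (auto simp: ubn_def n_def)
  have vn: "v \<bullet> n = 0" using v by (simp add: n_def)
  define h where "h = t^2 / R"
  have hR: "0 < h" "h < R" using t R by (auto simp: h_def field_simps power2_eq_square mult_strict_mono)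
  have key': "norm (t *\<^sub>R v + c *\<^sub>R n) < R" if c: "c^2 = (R - h)^2" for c
  proof -
    have "(norm (t *\<^sub>R v + c *\<^sub>R n))^2 = t^2 + (R - h)^2" using norm_orth_sq[OF v(1) n vn] c by simp
    also have "\<dots> = R^2 - t^2 + h^2"
      using R by (simp add: h_def power2_eq_square field_simps)
    also have "h^2 < t^2"
    proof -
      have "h < t" using t R by (simp add: h_def power2_eq_square field_simps)
      thus ?thesis using hR by (simp add: power_strict_mono)
    qed
    hence "R^2 - t^2 + h^2 < R^2" by simp
    finally show ?thesis using R by (simp add: power_less_imp_less_base)
  qed
  define a where "a = x + t *\<^sub>R v + h *\<^sub>R n"
  define b where "b = x + t *\<^sub>R v - h *\<^sub>R n"
  have "dist (x + R *\<^sub>R n) a = norm (t *\<^sub>R v + (h - R) *\<^sub>R n)"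
    by (simp add: a_def dist_norm norm_minus_commute algebra_simps)
  moreover have "(h - R)^2 = (R - h)^2" by (simp add: power2_commute)
  ultimately have "a \<in> ball (x + R *\<^sub>R n) R" using key'[of "h - R"] by simp
  hence aE: "a \<notin> E" using b1 by blast
  have "dist (x - R *\<^sub>R n) b = norm (t *\<^sub>R v + (R - h) *\<^sub>R n)"
    by (simp add: b_def dist_norm norm_minus_commute algebra_simps)
  hence "b \<in> ball (x - R *\<^sub>R n) R" using key'[of "R - h"] by simp
  hence bE: "b \<in> E" using b2 by blast
  have "closed_segment b a \<inter> E \<noteq> {}" using bE by auto
  moreover have "closed_segment b a - E \<noteq> {}" using aE by auto
  ultimately have "closed_segment b a \<inter> frontier E \<noteq> {}"
    by (intro connected_Int_frontier) auto
  then obtain y where y: "y \<in> frontier E" "y \<in> closed_segment b a" by blast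
  then obtain \<theta> where th: "0 \<le> \<theta>" "\<theta> \<le> 1" "y = (1 - \<theta>) *\<^sub>R b + \<theta> *\<^sub>R a"
    unfolding in_segment by blast
  have "y - x - t *\<^sub>R v = ((2 * \<theta> - 1) * h) *\<^sub>R n"
    by (simp add: th(3) a_def b_def algebra_simps flip: scaleR_add_left)
  hence "norm (y - x - t *\<^sub>R v) = \<bar>2 * \<theta> - 1\<bar> * h" using n hR by (simp add: abs_mult)
  also have "\<dots> \<le> 1 * h" using th hR by (intro mult_right_mono) auto
  finally show ?thesis using y(1) by (auto simp: h_def)
qed

lemma deriv_unit_bounds:
  fixes E :: "'a::euclidean_space set"
  assumes ub: "ubn E R" and R: "R > 0" and x: "x \<in> frontier E"
    and L: "(outer_normal E has_derivative L) (at x within frontier E)"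
    and v: "norm v = 1" "v \<bullet> outer_normal E x = 0"
  shows "norm (L v) \<le> 1 / R" "outer_normal E x \<bullet> L v = 0"
proof -
  define n where "n = outer_normal E x"
  have n: "norm n = 1" using ub x by (simp add: ubn_def n_def)
  have bl: "bounded_linear L" using L by (simp add: has_derivative_within_alt)
  obtain B where B: "B > 0" "\<And>h. norm (L h) \<le> norm h * B"
    using bounded_linear.pos_bounded[OF bl] by blast
  define C where "C = 2 / R + 2 + B"
  have C: "C > 0" using R B by (simp add: C_def add_pos_pos)
  have main: "norm (L v) \<le> 1/R + \<epsilon> * C \<and> \<bar>n \<bullet> L v\<bar> \<le> \<epsilon> * C" if e: "0 < \<epsilon>" "\<epsilon> \<le> 1" for \<epsilon>
  proof -
    obtain \<delta> where \<delta>: "\<delta> > 0" "\<forall>y\<in>frontier E. norm (y - x) < \<delta> \<longrightarrow>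
        norm (outer_normal E y - outer_normal E x - L (y - x)) \<le> \<epsilon> * norm (y - x)"
      using L e unfolding has_derivative_within_alt by blast
    define t where "t = min (R/2) (min (\<delta>/4) (\<epsilon> * R))"
    have t: "0 < t" "t < R" "t \<le> \<delta>/4" "t \<le> \<epsilon> * R" "t \<le> R/2"
      using R \<delta> e by (auto simp: t_def)
    obtain y where y: "y \<in> frontier E" "norm (y - x - t *\<^sub>R v) \<le> t^2 / R"
      using tangent_point[OF ub R x v t(1,2)] by blast
    define \<eta> where "\<eta> = t^2 / R"
    have \<eta>1: "\<eta> \<le> \<epsilon> * t"
    proof -
      have "t * t \<le> (\<epsilon> * R) * t" using t by (intro mult_right_mono) auto
      thus ?thesis using R by (simp add: \<eta>_def power2_eq_square field_simps)
    qed
    have \<eta>2: "\<eta> \<le> t"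
    proof -
      have "t * t \<le> R * t" using t by (intro mult_right_mono) auto
      thus ?thesis using R by (simp add: \<eta>_def power2_eq_square field_simps)
    qed
    have \<eta>0: "0 \<le> \<eta>" using R by (simp add: \<eta>_def)
    have yx1: "norm (y - x) \<le> t + \<eta>"
    proof -
      have "norm (y - x) \<le> norm (t *\<^sub>R v) + norm (y - x - t *\<^sub>R v)"
        by (metis norm_triangle_ineq add.commute diff_add_cancel)
      thus ?thesis using y t v by (simp add: \<eta>_def)
    qed
    hence yx2: "norm (y - x) \<le> 2 * t" using \<eta>2 by simp
    hence yd: "norm (y - x) < \<delta>" using t \<delta> by simp
    have D: "norm (outer_normal E y - n - L (y - x)) \<le> \<epsilon> * norm (y - x)"
      using \<delta>(2) y(1) yd by (simp add: n_def)
    have lip: "R * norm (n - outer_normal E y) \<le> norm (x - y)"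
      using normal_lipschitz[OF ub R x y(1)] by (simp add: n_def)
    hence lip': "norm (outer_normal E y - n) \<le> norm (y - x) / R"
      using R by (simp add: field_simps norm_minus_commute)
    have Ltv: "L (t *\<^sub>R v) = L (y - x) - L (y - x - t *\<^sub>R v)"
      using bl by (simp add: linear_simps)
    have Lerr: "norm (L (y - x - t *\<^sub>R v)) \<le> B * (\<epsilon> * t)"
    proof -
      have "norm (L (y - x - t *\<^sub>R v)) \<le> norm (y - x - t *\<^sub>R v) * B" by (rule B(2))
      also have "\<dots> \<le> \<eta> * B" using y B by (intro mult_right_mono) (auto simp: \<eta>_def)
      also have "\<dots> \<le> (\<epsilon> * t) * B" using \<eta>1 B by (intro mult_right_mono) auto
      finally show ?thesis by (simp add: mult.commute)
    qed
    have Lyx: "norm (L (y - x)) \<le> (1/R + \<epsilon>) * norm (y - x)"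
    proof -
      have "L (y - x) = (outer_normal E y - n) - (outer_normal E y - n - L (y - x))" by simp
      hence "norm (L (y - x)) \<le> norm (outer_normal E y - n) + norm (outer_normal E y - n - L (y - x))"
        by (metis norm_triangle_ineq4)
      also have "\<dots> \<le> norm (y - x) / R + \<epsilon> * norm (y - x)" using lip' D by simp
      finally show ?thesis by (simp add: algebra_simps)
    qed
    have "t * norm (L v) = norm (L (t *\<^sub>R v))" using bl t by (simp add: linear_simps)
    also have "\<dots> \<le> norm (L (y - x)) + norm (L (y - x - t *\<^sub>R v))"
      unfolding Ltv by (rule norm_triangle_ineq4)
    also have "\<dots> \<le> (1/R + \<epsilon>) * (t + \<epsilon> * t) + B * (\<epsilon> * t)"
    proof -
      have "(1/R + \<epsilon>) * norm (y - x) \<le> (1/R + \<epsilon>) * (t + \<epsilon> * t)"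
        using yx1 \<eta>1 R e by (intro mult_left_mono) auto
      thus ?thesis using Lyx Lerr by simp
    qed
    also have "\<dots> = t * (1/R + \<epsilon> * (1/R + 1 + \<epsilon> + B))" by (simp add: algebra_simps)
    also have "\<dots> \<le> t * (1/R + \<epsilon> * C)"
    proof -
      have "1/R \<le> 2/R" using R by (simp add: divide_right_mono)
      hence "1/R + 1 + \<epsilon> + B \<le> C" using e R by (simp add: C_def)
      hence "\<epsilon> * (1/R + 1 + \<epsilon> + B) \<le> \<epsilon> * C" using e by (intro mult_left_mono) auto
      thus ?thesis using t by (intro mult_left_mono) auto
    qed
    finally have A1: "norm (L v) \<le> 1/R + \<epsilon> * C" using t by simp
    have nn: "n \<bullet> n = 1" using n by (simp add: norm_eq_1)
    have ny: "norm (outer_normal E y) = 1" using ub y(1) by (simp add: ubn_def)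
    have "n \<bullet> (outer_normal E y - n) = - ((norm (outer_normal E y - n))^2 / 2)"
      using nn ny unfolding power2_norm_eq_inner
      by (simp add: inner_diff_left inner_diff_right inner_commute norm_eq_1 field_simps)
    hence "\<bar>n \<bullet> (outer_normal E y - n)\<bar> = (norm (outer_normal E y - n))^2 / 2" by simp
    also have "\<dots> \<le> (norm (y - x) / R)^2 / 2" using lip' by (simp add: power_mono)
    also have "\<dots> \<le> (2 * t / R)^2 / 2" using yx2 R by (simp add: power_mono divide_right_mono)
    also have "\<dots> = 2 * t * (t / R) / R" by (simp add: power2_eq_square)
    also have "\<dots> \<le> 2 * t * \<epsilon> / R"
      using t R by (simp add: divide_right_mono mult_left_mono pos_divide_le_eq)
    finally have N1: "\<bar>n \<bullet> (outer_normal E y - n)\<bar> \<le> 2 * t * \<epsilon> / R" .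
    have N2: "\<bar>n \<bullet> (outer_normal E y - n - L (y - x))\<bar> \<le> 2 * t * \<epsilon>"
    proof -
      have "\<bar>n \<bullet> (outer_normal E y - n - L (y - x))\<bar> \<le> norm n * norm (outer_normal E y - n - L (y - x))"
        by (rule Cauchy_Schwarz_ineq2)
      also have "\<dots> \<le> \<epsilon> * norm (y - x)" using n D by simp
      also have "\<dots> \<le> \<epsilon> * (2 * t)" using yx2 e by (intro mult_left_mono) auto
      finally show ?thesis by (simp add: mult.commute mult.left_commute)
    qed
    have N3: "\<bar>n \<bullet> L (y - x - t *\<^sub>R v)\<bar> \<le> B * (\<epsilon> * t)"
      using Cauchy_Schwarz_ineq2[of n "L (y - x - t *\<^sub>R v)"] n Lerr by simp
    have "t * \<bar>n \<bullet> L v\<bar> = \<bar>n \<bullet> L (t *\<^sub>R v)\<bar>" using bl t by (simp add: linear_simps abs_mult)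
    also have "n \<bullet> L (t *\<^sub>R v) = n \<bullet> (outer_normal E y - n) - n \<bullet> (outer_normal E y - n - L (y - x))
         - n \<bullet> L (y - x - t *\<^sub>R v)"
      unfolding Ltv by (simp add: inner_diff_right)
    also have "\<bar>\<dots>\<bar> \<le> 2 * t * \<epsilon> / R + 2 * t * \<epsilon> + B * (\<epsilon> * t)" using N1 N2 N3 by linarith
    also have "\<dots> = t * (\<epsilon> * C)" by (simp add: C_def algebra_simps)
    finally have A2: "\<bar>n \<bullet> L v\<bar> \<le> \<epsilon> * C" using t by simp
    show ?thesis using A1 A2 by simp
  qed
  show "norm (L v) \<le> 1 / R"
  proof (rule le_eps[where c = C])
    fix \<epsilon> :: real assume "\<epsilon> > 0"
    have "norm (L v) \<le> 1/R + min \<epsilon> 1 * C" using main[of "min \<epsilon> 1"] \<open>\<epsilon> > 0\<close> by simp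
    also have "\<dots> \<le> 1/R + \<epsilon> * C" using C by (simp add: mult_right_mono)
    finally show "norm (L v) \<le> 1/R + \<epsilon> * C" .
  qed (use C in simp)
  have "\<bar>n \<bullet> L v\<bar> \<le> 0"
  proof (rule le_eps[where c = C])
    fix \<epsilon> :: real assume "\<epsilon> > 0"
    have "\<bar>n \<bullet> L v\<bar> \<le> min \<epsilon> 1 * C" using main[of "min \<epsilon> 1"] \<open>\<epsilon> > 0\<close> by simp
    also have "\<dots> \<le> \<epsilon> * C" using C by (simp add: mult_right_mono)
    finally show "\<bar>n \<bullet> L v\<bar> \<le> 0 + \<epsilon> * C" by simp
  qed (use C in simp)
  thus "outer_normal E x \<bullet> L v = 0" by (simp add: n_def)
qed

lemma deriv_tangent_bounds:
  fixes E :: "'a::euclidean_space set"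
  assumes ub: "ubn E R" and R: "R > 0" and x: "x \<in> frontier E"
    and L: "(outer_normal E has_derivative L) (at x within frontier E)"
    and w: "w \<bullet> outer_normal E x = 0"
  shows "norm (L w) \<le> norm w / R" "outer_normal E x \<bullet> L w = 0"
proof -
  have bl: "bounded_linear L" using L by (simp add: has_derivative_within_alt)
  have "norm (L w) \<le> norm w / R \<and> outer_normal E x \<bullet> L w = 0"
  proof (cases "w = 0")
    case True thus ?thesis using bl by (simp add: linear_simps)
  next
    case False
    define v where "v = (1 / norm w) *\<^sub>R w"
    have v: "norm v = 1" "v \<bullet> outer_normal E x = 0" using False w by (auto simp: v_def)
    have wv: "w = norm w *\<^sub>R v" using False by (simp add: v_def)
    have Lw: "L w = norm w *\<^sub>R L v" by (subst wv) (simp add: bl linear_simps)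
    have u: "norm (L v) \<le> 1 / R" "outer_normal E x \<bullet> L v = 0" using deriv_unit_bounds[OF ub R x L v] by auto
    have "norm (L w) = norm w * norm (L v)" using Lw by simp
    also have "\<dots> \<le> norm w * (1 / R)" using u by (intro mult_left_mono) auto
    finally show ?thesis using u Lw by simp
  qed
  thus "norm (L w) \<le> norm w / R" "outer_normal E x \<bullet> L w = 0" by auto
qed



lemma curvature_bounds:
  fixes E :: "'a::euclidean_space set"
  assumes ub: "ubn E R" and R: "R > 0" and C2: "C2_regular E" and x: "x \<in> frontier E"
  shows "\<bar>mean_curv E x\<bar> \<le> real (DIM('a) - 1) / R" "sff_norm E x \<le> real (DIM('a) - 1) / R"
proof -
  define L where "L = gauss_diff E x"
  have L: "(outer_normal E has_derivative L) (at x within frontier E)"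
    using someI_ex[OF C2_normal_diff[OF C2 x]] by (simp add: L_def gauss_diff_def)
  have bl: "bounded_linear L" using L by (simp add: has_derivative_within_alt)
  define n where "n = outer_normal E x"
  have n: "norm n = 1" using ub x by (simp add: ubn_def n_def)
  have nn: "n \<bullet> n = 1" using n by (simp add: norm_eq_1)
  define P where "P = (\<lambda>b. b - (b \<bullet> n) *\<^sub>R n)"
  have tp: "tang_proj E x b = P b" for b by (simp add: tang_proj_def P_def n_def)
  have Pn: "P b \<bullet> n = 0" for b using nn by (simp add: P_def inner_diff_left)
  have LP: "norm (L (P b)) \<le> norm (P b) / R" "n \<bullet> L (P b) = 0" for b
    using deriv_tangent_bounds[OF ub R x L, of "P b"] Pn by (auto simp: n_def)
  have nP: "(norm (P b))^2 = 1 - (b \<bullet> n)^2" if "b \<in> Basis" for b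
  proof -
    have "b \<bullet> b = 1" using that by simp
    thus ?thesis using nn unfolding power2_norm_eq_inner
      by (simp add: P_def inner_diff_left inner_diff_right inner_commute power2_eq_square algebra_simps)
  qed
  have sumn: "(\<Sum>b\<in>Basis. (b \<bullet> n)^2) = 1"
    using euclidean_inner[of n n] nn by (simp add: power2_eq_square inner_commute)
  have DIM1: "DIM('a) \<ge> 1" using DIM_positive[where 'a='a] by linarith
  have sumP: "(\<Sum>b\<in>Basis. (norm (P b))^2) = real (DIM('a) - 1)"
  proof -
    have "(\<Sum>b\<in>Basis. (norm (P b))^2) = (\<Sum>b\<in>Basis. 1 - (b \<bullet> n)^2)"
      by (rule sum.cong) (auto simp: nP)
    also have "\<dots> = real DIM('a) - 1" using sumn by (simp add: sum_subtractf)
    finally show ?thesis using DIM1 by (simp add: of_nat_diff)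
  qed
  have trm: "b \<bullet> L (P b) = P b \<bullet> L (P b)" for b
  proof -
    have "b = P b + (b \<bullet> n) *\<^sub>R n" by (simp add: P_def)
    hence "b \<bullet> L (P b) = P b \<bullet> L (P b) + (b \<bullet> n) * (n \<bullet> L (P b))"
      by (metis inner_add_left inner_scaleR_left)
    thus ?thesis using LP(2) by simp
  qed
  have tb: "\<bar>b \<bullet> L (P b)\<bar> \<le> (norm (P b))^2 / R" for b
  proof -
    have "\<bar>P b \<bullet> L (P b)\<bar> \<le> norm (P b) * norm (L (P b))" by (rule Cauchy_Schwarz_ineq2)
    also have "\<dots> \<le> norm (P b) * (norm (P b) / R)" using LP(1) by (intro mult_left_mono) auto
    finally show ?thesis using trm[of b] by (simp add: power2_eq_square)
  qed
  have "\<bar>mean_curv E x\<bar> = \<bar>\<Sum>b\<in>Basis. b \<bullet> L (P b)\<bar>" by (simp add: mean_curv_def L_def tp)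
  also have "\<dots> \<le> (\<Sum>b\<in>Basis. \<bar>b \<bullet> L (P b)\<bar>)" by (rule sum_abs)
  also have "\<dots> \<le> (\<Sum>b\<in>Basis. (norm (P b))^2 / R)" by (rule sum_mono) (rule tb)
  also have "\<dots> = real (DIM('a) - 1) / R" using sumP by (simp add: sum_divide_distrib[symmetric])
  finally show "\<bar>mean_curv E x\<bar> \<le> real (DIM('a) - 1) / R" .
  have "(\<Sum>b\<in>Basis. (norm (L (P b)))^2) \<le> (\<Sum>b\<in>Basis. (norm (P b) / R)^2)"
    by (rule sum_mono) (use LP(1) in \<open>auto intro: power_mono\<close>)
  also have "\<dots> = real (DIM('a) - 1) / R^2"
    using sumP by (simp add: power_divide sum_divide_distrib[symmetric])
  finally have s1: "(\<Sum>b\<in>Basis. (norm (L (P b)))^2) \<le> real (DIM('a) - 1) / R^2" .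
  define m where "m = real (DIM('a) - 1)"
  have m0: "m \<ge> 0" by (simp add: m_def)
  have "sff_norm E x = sqrt (\<Sum>b\<in>Basis. (norm (L (P b)))^2)" by (simp add: sff_norm_def L_def tp)
  also have "\<dots> \<le> sqrt (m / R^2)" using s1 by (simp add: m_def)
  also have "\<dots> = sqrt m / R" using R by (simp add: real_sqrt_divide)
  also have "sqrt m \<le> m"
  proof (cases "m = 0")
    case True thus ?thesis by simp
  next
    case False
    hence "DIM('a) - 1 \<noteq> 0" unfolding m_def by (metis of_nat_0)
    hence "1 \<le> DIM('a) - 1" by linarith
    hence "m \<ge> 1" unfolding m_def by (metis of_nat_1 of_nat_le_iff)
    hence "m \<le> m^2" by (simp add: power2_eq_square)
    hence "sqrt m \<le> sqrt (m^2)" by (rule real_sqrt_le_mono)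
    thus ?thesis using m0 by simp
  qed
  hence "sqrt m / R \<le> m / R" using R by (simp add: divide_right_mono)
  finally show "sff_norm E x \<le> real (DIM('a) - 1) / R" by (simp add: m_def)
qed



theorem lemma4p1:
  fixes E :: "'a::euclidean_space set"
  assumes "bounded E" and "E \<noteq> {}"
    and "\<exists>r>0. uniform_ball E r"
  shows "2 * S_Linf E = 1 / reach_rE E \<and>
         (\<forall>x\<in>frontier E. \<forall>y\<in>frontier E. x \<noteq> y \<longrightarrow>
           norm (outer_normal E x - outer_normal E y) / norm (x - y) \<le> 2 * S_Linf E) \<and>
         (C2_regular E \<longrightarrow> (\<forall>x\<in>frontier E.
           \<bar>mean_curv E x\<bar> \<le> 2 * real (DIM('a) - 1) * S_Linf E \<and>
           sff_norm E x \<le> 2 * real (DIM('a) - 1) * S_Linf E))"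
proof -
  obtain r0 where r0: "r0 > 0" "uniform_ball E r0" using assms(3) by blast
  have ub0: "ubn E r0" by (rule uniform_ball_ubn[OF r0(2) r0(1)])
  have "E \<noteq> UNIV" using assms(1) by auto
  hence nE: "- E \<noteq> {}" by auto
  have "frontier E \<noteq> {}" using assms(2) \<open>E \<noteq> UNIV\<close> by (simp add: frontier_eq_empty)
  then obtain x0 where x0: "x0 \<in> frontier E" by blast
  define n0 where "n0 = outer_normal E x0"
  have n0: "norm n0 = 1" "ball (x0 - r0 *\<^sub>R n0) r0 \<subseteq> E" using ub0 x0 by (auto simp: ubn_def n0_def)
  have aE: "x0 - r0 *\<^sub>R n0 \<in> E" using n0(2) r0 by auto
  obtain Bd where Bd: "\<And>y. y \<in> E \<Longrightarrow> norm y \<le> Bd" using assms(1) unfolding bounded_iff by blast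
  define M where "M = \<bar>Bd\<bar> + norm x0 + r0 + 1"
  have "norm (x0 - M *\<^sub>R n0) \<ge> M - norm x0"
    using norm_triangle_ineq2[of "M *\<^sub>R n0" x0] n0 by (simp add: M_def norm_minus_commute)
  hence bE: "x0 - M *\<^sub>R n0 \<notin> E" using Bd[of "x0 - M *\<^sub>R n0"] r0(1) by (auto simp: M_def)
  have "closed_segment (x0 - r0 *\<^sub>R n0) (x0 - M *\<^sub>R n0) \<inter> frontier E \<noteq> {}"
    by (rule connected_Int_frontier) (use aE bE in auto)
  then obtain y0 where y0: "y0 \<in> frontier E" "y0 \<in> closed_segment (x0 - r0 *\<^sub>R n0) (x0 - M *\<^sub>R n0)" by blast
  then obtain \<theta> where th: "0 \<le> \<theta>" "\<theta> \<le> 1" "y0 = (1 - \<theta>) *\<^sub>R (x0 - r0 *\<^sub>R n0) + \<theta> *\<^sub>R (x0 - M *\<^sub>R n0)"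
    unfolding in_segment by blast
  define \<tau> where "\<tau> = r0 + \<theta> * (M - r0)"
  have "M \<ge> r0" by (simp add: M_def)
  hence tau: "\<tau> \<ge> r0" using th by (simp add: \<tau>_def)
  have y0e: "x0 - y0 = \<tau> *\<^sub>R n0" by (simp add: th(3) \<tau>_def algebra_simps)
  have "x0 \<noteq> y0" using y0e tau r0 n0 by auto
  have S0: "S_kernel E x0 y0 = 1 / \<tau>"
    using y0e n0 tau r0 by (simp add: S_kernel_def n0_def[symmetric] power2_eq_square norm_eq_1[symmetric])
  define Sset where "Sset = {\<bar>S_kernel E x y\<bar> | x y. x \<in> frontier E \<and> y \<in> frontier E \<and> x \<noteq> y}"
  have S_le: "\<bar>S_kernel E x y\<bar> \<le> 1 / (2 * c)" if "2 * c * \<bar>(x - y) \<bullet> outer_normal E x\<bar> \<le> (norm (x - y))^2" "x \<noteq> y" "c > 0"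
    for x y and c :: real
  proof -
    have "\<bar>S_kernel E x y\<bar> = \<bar>(x - y) \<bullet> outer_normal E x\<bar> / (norm (x - y))^2" by (rule S_kernel_abs)
    also have "\<dots> \<le> 1 / (2 * c)"
    proof -
      have "0 < (norm (x - y))^2" using that(2) by simp
      thus ?thesis using that(1,3) by (simp add: divide_le_eq field_simps)
    qed
    finally show ?thesis .
  qed
  have Sbdd0: "\<bar>S_kernel E x y\<bar> \<le> 1 / (2 * r0)" if "x \<in> frontier E" "y \<in> frontier E" "x \<noteq> y" for x y
    using S_le[OF S_bound_ubn[OF ub0 r0(1) that] that(3) r0(1)] .
  have Sne: "Sset \<noteq> {}" using x0 y0(1) \<open>x0 \<noteq> y0\<close> unfolding Sset_def by blast
  have Sbdd: "bdd_above Sset" unfolding Sset_def bdd_above_def using Sbdd0 by blast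
  define s where "s = S_Linf E"
  have sSup: "s = Sup Sset" by (simp add: s_def S_Linf_def Sset_def)
  have Sle_s: "\<bar>S_kernel E x y\<bar> \<le> s" if "x \<in> frontier E" "y \<in> frontier E" "x \<noteq> y" for x y
    unfolding sSup by (rule cSup_upper[OF _ Sbdd]) (use that in \<open>auto simp: Sset_def\<close>)
  have "1 / \<tau> \<le> s" using Sle_s[OF x0 y0(1) \<open>x0 \<noteq> y0\<close>] S0 tau r0 by simp
  hence spos: "s > 0" using tau r0 by (smt (verit) divide_pos_pos)
  define R where "R = 1 / (2 * s)"
  have R: "R > 0" using spos by (simp add: R_def)
  have SbR: "2 * R * \<bar>(x - y) \<bullet> outer_normal E x\<bar> \<le> (norm (x - y))^2"
    if "x \<in> frontier E" "y \<in> frontier E" "x \<noteq> y" for x y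
  proof -
    have "\<bar>(x - y) \<bullet> outer_normal E x\<bar> / (norm (x - y))^2 \<le> s"
      using Sle_s[OF that] by (simp add: S_kernel_abs)
    moreover have "0 < (norm (x - y))^2" using that(3) by simp
    ultimately have "\<bar>(x - y) \<bullet> outer_normal E x\<bar> \<le> s * (norm (x - y))^2" by (simp add: divide_le_eq)
    hence "2 * R * \<bar>(x - y) \<bullet> outer_normal E x\<bar> \<le> 2 * R * (s * (norm (x - y))^2)"
      using R by (intro mult_left_mono) auto
    also have "\<dots> = (norm (x - y))^2" using spos by (simp add: R_def)
    finally show ?thesis .
  qed
  have ubR: "ubn E R" by (rule ubn_from_S[OF ub0 r0(1) R SbR])
  define RS where "RS = {r. r > 0 \<and> (\<forall>x. infdist x (frontier E) < r \<longrightarrow> signed_dist E differentiable (at x))}"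
  have RinRS: "R \<in> RS" using ubn_reach[OF ubR R assms(2) nE] R by (simp add: RS_def)
  have RSle: "r \<le> R" if "r \<in> RS" for r
  proof -
    have rpos: "r > 0" and dif: "\<forall>z. infdist z (frontier E) < r \<longrightarrow> signed_dist E differentiable (at z)"
      using that by (auto simp: RS_def)
    have dif2: "\<forall>z. infdist z (frontier (- E)) < r \<longrightarrow> signed_dist (- E) differentiable (at z)"
    proof (intro allI impI)
      fix z assume "infdist z (frontier (- E)) < r"
      hence "signed_dist E differentiable (at z)" using dif by simp
      hence "(\<lambda>w. - signed_dist E w) differentiable (at z)" by (rule differentiable_minus)
      moreover have "signed_dist (- E) = (\<lambda>w. - signed_dist E w)" by (rule ext) (simp add: signed_dist_compl)
      ultimately show "signed_dist (- E) differentiable (at z)" by simp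
    qed
    have "\<bar>S_kernel E x y\<bar> \<le> 1 / (2 * r)" if xy: "x \<in> frontier E" "y \<in> frontier E" "x \<noteq> y" for x y
    proof -
      define n where "n = outer_normal E x"
      have n: "norm n = 1" "ball (x + r0 *\<^sub>R n) r0 \<subseteq> - E" "ball (x - r0 *\<^sub>R n) r0 \<subseteq> E"
        using ub0 xy(1) by (auto simp: ubn_def n_def)
      define a where "a = \<bar>(x - y) \<bullet> n\<bar>"
      define b where "b = (norm (x - y))^2"
      have tb: "2 * t * a \<le> b" if t: "0 \<le> t" "t < r" for t
      proof -
        have d1: "t \<le> dist (x + t *\<^sub>R n) y"
          by (rule side_bound[OF xy(1) n(1) r0(1) n(2) assms(2) dif xy(2) t])
        have xf: "x \<in> frontier (- E)" "y \<in> frontier (- E)" using xy by auto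
        have nn: "norm (- n) = 1" using n by simp
        have bb: "ball (x + r0 *\<^sub>R (- n)) r0 \<subseteq> - (- E)" using n(3) by simp
        have d2: "t \<le> dist (x + t *\<^sub>R (- n)) y"
          by (rule side_bound[OF xf(1) nn r0(1) bb nE dif2 xf(2) t])
        have "t^2 \<le> (norm ((x - y) + t *\<^sub>R n))^2" using d1 t by (simp add: dist_norm algebra_simps power_mono)
        hence e1: "0 \<le> b + 2 * t * ((x - y) \<bullet> n)" unfolding norm_sq_comb[OF n(1)] by (simp add: b_def)
        have "t^2 \<le> (norm ((x - y) + (-t) *\<^sub>R n))^2" using d2 t by (simp add: dist_norm algebra_simps power_mono)
        hence e2: "0 \<le> b - 2 * t * ((x - y) \<bullet> n)" unfolding norm_sq_comb[OF n(1)] by (simp add: b_def)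
        show ?thesis using e1 e2 t by (simp add: a_def abs_if)
      qed
      have "2 * r * a \<le> b"
      proof (rule le_eps[where c = "2 * a"])
        fix \<epsilon> :: real assume e: "\<epsilon> > 0"
        define t where "t = max 0 (r - \<epsilon>)"
        have t: "0 \<le> t" "t < r" "r \<le> t + \<epsilon>" using e rpos by (auto simp: t_def)
        have "2 * r * a \<le> 2 * (t + \<epsilon>) * a" using t by (intro mult_right_mono) (auto simp: a_def)
        also have "\<dots> = 2 * t * a + \<epsilon> * (2 * a)" by (simp add: algebra_simps)
        finally show "2 * r * a \<le> b + \<epsilon> * (2 * a)" using tb[OF t(1,2)] by simp
      qed (simp add: a_def)
      thus ?thesis using S_le[OF _ xy(3) rpos] by (simp add: a_def b_def n_def)
    qed
    hence "s \<le> 1 / (2 * r)" unfolding sSup using Sne by (intro cSup_least) (auto simp: Sset_def)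
    thus "r \<le> R" using rpos spos by (simp add: R_def field_simps)
  qed
  have reach: "reach_rE E = R"
    unfolding reach_rE_def RS_def[symmetric] by (rule cSup_eq_maximum[OF RinRS RSle])
  have part1: "2 * S_Linf E = 1 / reach_rE E" using reach spos by (simp add: R_def s_def)
  have part2: "norm (outer_normal E x - outer_normal E y) / norm (x - y) \<le> 2 * S_Linf E"
    if "x \<in> frontier E" "y \<in> frontier E" "x \<noteq> y" for x y
  proof -
    have "R * norm (outer_normal E x - outer_normal E y) \<le> norm (x - y)"
      by (rule normal_lipschitz[OF ubR R that(1,2)])
    hence "norm (outer_normal E x - outer_normal E y) \<le> norm (x - y) / R" using R by (simp add: field_simps)
    hence "norm (outer_normal E x - outer_normal E y) / norm (x - y) \<le> 1 / R"
      using that(3) R by (simp add: divide_le_eq field_simps)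
    thus ?thesis using spos by (simp add: R_def s_def)
  qed
  have part3: "\<bar>mean_curv E x\<bar> \<le> 2 * real (DIM('a) - 1) * S_Linf E \<and>
           sff_norm E x \<le> 2 * real (DIM('a) - 1) * S_Linf E" if "C2_regular E" "x \<in> frontier E" for x
  proof -
    have "real (DIM('a) - 1) / R = 2 * real (DIM('a) - 1) * S_Linf E" using spos by (simp add: R_def s_def)
    thus ?thesis using curvature_bounds[OF ubR R that] by simp
  qed
  show ?thesis using part1 part2 part3 by blast
qed


end
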